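(* Let $R$ be the root system of a complex simple Lie algebra $\mathfrak g$, with positive roots $R_+$, $\rho=\frac12\sum_{\mu\in R_+}\mu$, maximal root $\lambda_{ad}$, and let $(\cdot,\cdot)$ be the minimal invariant bilinear form on $\mathfrak h^*$ (the $W$-invariant form normalised so that the maximal root has square length $2$). Let $\alpha,\beta,\gamma$ be the Vogel parameters of $\mathfrak g$ listed below and $t=\alpha+\beta+\gamma$. Then for any function $\phi$ of one real variable which is even or odd, and such that $\phi((\mu,\rho))\neq 0$ for all $\mu\in R_+$ and $\phi(\alpha/2),\phi(\beta/2),\phi(\gamma/2)\neq 0$, $$\prod_{\mu\in R_+}\frac{\phi((\mu,\lambda_{ad}+\rho))}{\phi((\mu,\rho))}=\frac{\phi((\alpha-2t)/2)}{\phi(\alpha/2)}\cdot\frac{\phi((\beta-2t)/2)}{\phi(\beta/2)}\cdot\frac{\phi((\gamma-2t)/2)}{\phi(\gamma/2)}.$$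
   Context: $\mathfrak h$ is a Cartan subalgebra of $\mathfrak g$, $R\subset\mathfrak h^*$ the set of roots, $W$ the Weyl group. Vogel parameters $(\alpha,\beta,\gamma)$: $A_n=\mathfrak{sl}_{n+1}$: $(-2,2,n+1)$; $B_n=\mathfrak{so}_{2n+1}$: $(-2,4,2n-3)$; $C_n=\mathfrak{sp}_{2n}$: $(-2,1,n+2)$; $D_n=\mathfrak{so}_{2n}$: $(-2,4,2n-4)$; $G_2$: $(-2,10/3,8/3)$; $F_4$: $(-2,5,6)$; $E_6$: $(-2,6,8)$; $E_7$: $(-2,8,12)$; $E_8$: $(-2,12,20)$. *)

theory Defs
  imports Complex_Main
begin

text \<open>Weights/roots are represented concretely as coordinate vectors
  \<open>nat \<Rightarrow> real\<close> (only finitely many coordinates are nonzero), in the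
  standard (Bourbaki, Planches I--IX) realisations of the irreducible root systems,
  indexed from 0.\<close>

type_synonym vec = "nat \<Rightarrow> real"

definition ev :: "nat \<Rightarrow> vec" where
  "ev i = (\<lambda>k. if k = i then 1 else 0)"

definition vadd :: "vec \<Rightarrow> vec \<Rightarrow> vec" where
  "vadd x y = (\<lambda>k. x k + y k)"

definition vsub :: "vec \<Rightarrow> vec \<Rightarrow> vec" where
  "vsub x y = (\<lambda>k. x k - y k)"

definition vscale :: "real \<Rightarrow> vec \<Rightarrow> vec" where
  "vscale c x = (\<lambda>k. c * x k)"

definition halfvec :: "nat \<Rightarrow> nat set \<Rightarrow> vec \<Rightarrow> vec" where
  "halfvec m S tail = (\<lambda>k. if k < m then (if k \<in> S then -1/2 else 1/2) else tail k)"

datatype lie_type = A nat | B nat | C nat | D nat | G2 | F4 | E6 | E7 | E8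

fun valid_type :: "lie_type \<Rightarrow> bool" where
  "valid_type (A n) = (n \<ge> 1)"
| "valid_type (B n) = (n \<ge> 2)"
| "valid_type (C n) = (n \<ge> 3)"
| "valid_type (D n) = (n \<ge> 4)"
| "valid_type _ = True"

fun amb_dim :: "lie_type \<Rightarrow> nat" where
  "amb_dim (A n) = n + 1"
| "amb_dim (B n) = n"
| "amb_dim (C n) = n"
| "amb_dim (D n) = n"
| "amb_dim G2 = 3"
| "amb_dim F4 = 4"
| "amb_dim E6 = 8"
| "amb_dim E7 = 8"
| "amb_dim E8 = 8"

fun posroots :: "lie_type \<Rightarrow> vec set" where
  "posroots (A n) = {vsub (ev i) (ev j) | i j. i < j \<and> j \<le> n}"
| "posroots (B n) = {vsub (ev i) (ev j) | i j. i < j \<and> j < n}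
                  \<union> {vadd (ev i) (ev j) | i j. i < j \<and> j < n}
                  \<union> {ev i | i. i < n}"
| "posroots (C n) = {vsub (ev i) (ev j) | i j. i < j \<and> j < n}
                  \<union> {vadd (ev i) (ev j) | i j. i < j \<and> j < n}
                  \<union> {vscale 2 (ev i) | i. i < n}"
| "posroots (D n) = {vsub (ev i) (ev j) | i j. i < j \<and> j < n}
                  \<union> {vadd (ev i) (ev j) | i j. i < j \<and> j < n}"
| "posroots G2 = {vsub (ev 0) (ev 1),
                  vadd (vscale (-2) (ev 0)) (vadd (ev 1) (ev 2)),
                  vsub (ev 2) (ev 0),
                  vsub (ev 2) (ev 1),
                  vadd (vsub (ev 0) (vscale 2 (ev 1))) (ev 2),
                  vsub (vscale 2 (ev 2)) (vadd (ev 0) (ev 1))}"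
| "posroots F4 = {vsub (ev i) (ev j) | i j. i < j \<and> j < 4}
                  \<union> {vadd (ev i) (ev j) | i j. i < j \<and> j < 4}
                  \<union> {ev i | i. i < 4}
                  \<union> {halfvec 4 S (\<lambda>_. 0) | S. S \<subseteq> {1,2,3}}"
| "posroots E6 = {vsub (ev j) (ev i) | i j. i < j \<and> j < 5}
                  \<union> {vadd (ev i) (ev j) | i j. i < j \<and> j < 5}
                  \<union> {halfvec 5 S (\<lambda>k. if k = 5 \<or> k = 6 then -1/2 else if k = 7 then 1/2 else 0)
                      | S. S \<subseteq> {..<5} \<and> even (card S)}"
| "posroots E7 = {vsub (ev j) (ev i) | i j. i < j \<and> j < 6}
                  \<union> {vadd (ev i) (ev j) | i j. i < j \<and> j < 6}
                  \<union> {vsub (ev 7) (ev 6)}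
                  \<union> {halfvec 6 S (\<lambda>k. if k = 6 then -1/2 else if k = 7 then 1/2 else 0)
                      | S. S \<subseteq> {..<6} \<and> odd (card S)}"
| "posroots E8 = {vsub (ev j) (ev i) | i j. i < j \<and> j < 8}
                  \<union> {vadd (ev i) (ev j) | i j. i < j \<and> j < 8}
                  \<union> {halfvec 7 S (\<lambda>k. if k = 7 then 1/2 else 0)
                      | S. S \<subseteq> {..<7} \<and> even (card S)}"

fun max_root :: "lie_type \<Rightarrow> vec" where
  "max_root (A n) = vsub (ev 0) (ev n)"
| "max_root (B n) = vadd (ev 0) (ev 1)"
| "max_root (C n) = vscale 2 (ev 0)"
| "max_root (D n) = vadd (ev 0) (ev 1)"
| "max_root G2 = vsub (vscale 2 (ev 2)) (vadd (ev 0) (ev 1))"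
| "max_root F4 = vadd (ev 0) (ev 1)"
| "max_root E6 = halfvec 5 {} (\<lambda>k. if k = 5 \<or> k = 6 then -1/2 else if k = 7 then 1/2 else 0)"
| "max_root E7 = vsub (ev 7) (ev 6)"
| "max_root E8 = vadd (ev 6) (ev 7)"

definition eucl :: "lie_type \<Rightarrow> vec \<Rightarrow> vec \<Rightarrow> real" where
  "eucl T x y = (\<Sum>k<amb_dim T. x k * y k)"

text \<open>The minimal invariant form: the W-invariant form (a multiple of the
  Euclidean one, the root system being irreducible) normalised so that the maximal
  root has square length 2.\<close>
definition minform :: "lie_type \<Rightarrow> vec \<Rightarrow> vec \<Rightarrow> real" where
  "minform T x y = 2 * eucl T x y / eucl T (max_root T) (max_root T)"

definition rho :: "lie_type \<Rightarrow> vec" where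
  "rho T = (\<lambda>k. (1/2) * (\<Sum>\<mu>\<in>posroots T. \<mu> k))"

fun vogel :: "lie_type \<Rightarrow> real \<times> real \<times> real" where
  "vogel (A n) = (-2, 2, real n + 1)"
| "vogel (B n) = (-2, 4, 2 * real n - 3)"
| "vogel (C n) = (-2, 1, real n + 2)"
| "vogel (D n) = (-2, 4, 2 * real n - 4)"
| "vogel G2 = (-2, 10/3, 8/3)"
| "vogel F4 = (-2, 5, 6)"
| "vogel E6 = (-2, 6, 8)"
| "vogel E7 = (-2, 8, 12)"
| "vogel E8 = (-2, 12, 20)"

end

theory Submission
  imports Defs "HOL-Library.Multiset"
begin


lemma prod_list_div: "prod_list (map (\<lambda>x. f x / g x) xs) = prod_list (map f xs) / (prod_list (map g xs) :: real)"
  by (induction xs) auto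

lemma par_prod:
  fixes \<phi> :: "real \<Rightarrow> real"
  assumes par: "(\<forall>x. \<phi> (- x) = \<phi> x) \<or> (\<forall>x. \<phi> (- x) = - \<phi> x)"
    and m: "mset (map abs xs) = mset (map abs ys)"
    and s: "prod_list (map sgn xs) = prod_list (map sgn ys)"
  shows "prod_list (map \<phi> xs) = prod_list (map \<phi> ys)"
proof -
  have pm: "prod_list (map (\<phi> \<circ> abs) xs) = prod_list (map (\<phi> \<circ> abs) ys)"
  proof -
    have "prod_list (map (\<phi> \<circ> abs) xs) = prod_mset (mset (map \<phi> (map abs xs)))"
      by (simp only: prod_mset_prod_list map_map)
    also have "\<dots> = prod_mset (image_mset \<phi> (mset (map abs xs)))" by (simp only: mset_map)
    also have "\<dots> = prod_mset (image_mset \<phi> (mset (map abs ys)))" using m by simp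
    also have "\<dots> = prod_mset (mset (map \<phi> (map abs ys)))" by (simp only: mset_map)
    also have "\<dots> = prod_list (map (\<phi> \<circ> abs) ys)"
      by (simp only: prod_mset_prod_list map_map)
    finally show ?thesis .
  qed
  from par show ?thesis
  proof
    assume e: "\<forall>x. \<phi> (- x) = \<phi> x"
    have "\<phi> = \<phi> \<circ> abs" using e by (auto simp: abs_if fun_eq_iff)
    then show ?thesis using pm by metis
  next
    assume o: "\<forall>x. \<phi> (- x) = - \<phi> x"
    have h: "\<phi> x = sgn x * (\<phi> \<circ> abs) x" for x
    proof -
      have "\<phi> 0 = 0" using o[rule_format, of 0] by simp
      then show ?thesis using o[rule_format, of x] by (auto simp: sgn_if)
    qed
    have q: "prod_list (map \<phi> zs) = prod_list (map sgn zs) * prod_list (map (\<phi> \<circ> abs) zs)" for zs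
    proof (induction zs)
      case Nil show ?case by simp
    next
      case (Cons a zs)
      have "\<phi> a = sgn a * (\<phi> \<circ> abs) a" by (rule h)
      then show ?case using Cons by (simp only: list.map prod_list.Cons) (simp add: mult_ac comp_def)
    qed
    show ?thesis using q[of xs] q[of ys] pm s by simp
  qed
qed

lemma sort_mset: "sort xs = sort ys \<Longrightarrow> mset xs = mset (ys :: real list)"
  by (metis mset_sort)

lemma final_step:
  fixes \<phi> :: "real \<Rightarrow> real"
  assumes par: "(\<forall>x. \<phi> (- x) = \<phi> x) \<or> (\<forall>x. \<phi> (- x) = - \<phi> x)"
   and nz: "prod_list (map \<phi> Ys) \<noteq> 0" "\<phi> a1 \<noteq> 0" "\<phi> a2 \<noteq> 0" "\<phi> a3 \<noteq> 0"
   and m: "mset (map abs (Xs @ [a1,a2,a3])) = mset (map abs (Ys @ [n1,n2,n3]))"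
   and s: "prod_list (map sgn (Xs@[a1,a2,a3])) = prod_list (map sgn (Ys @ [n1,n2,n3]))"
 shows "prod_list (map \<phi> Xs) / prod_list (map \<phi> Ys) = \<phi> n1 / \<phi> a1 * (\<phi> n2 / \<phi> a2) * (\<phi> n3 / \<phi> a3)"
proof -
  have "prod_list (map \<phi> (Xs @ [a1,a2,a3])) = prod_list (map \<phi> (Ys @ [n1,n2,n3]))"
    by (rule par_prod[OF par m s])
  then have "prod_list (map \<phi> Xs) * (\<phi> a1 * \<phi> a2 * \<phi> a3) = prod_list (map \<phi> Ys) * (\<phi> n1 * \<phi> n2 * \<phi> n3)"
    by (simp add: mult_ac)
  then show ?thesis using nz by (simp add: field_simps)
qed

lemma prod_list_distinct_conv_prod_set: "distinct xs \<Longrightarrow> prod_list (map f xs) = prod f (set xs)"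
  by (induction xs) auto

lemma rho_list: "posroots T = set L \<Longrightarrow> distinct L \<Longrightarrow> rho T k = 1/2 * sum_list (map (\<lambda>\<mu>. \<mu> k) L)"
  by (simp add: rho_def sum_list_distinct_conv_sum_set)

lemma concrete_case:
  fixes \<phi> :: "real \<Rightarrow> real"
  assumes "posroots T = set L" "distinct L"
   and par: "(\<forall>x. \<phi> (- x) = \<phi> x) \<or> (\<forall>x. \<phi> (- x) = - \<phi> x)"
   and nz: "\<forall>\<mu>\<in>posroots T. \<phi> (minform T \<mu> (rho T)) \<noteq> 0" "\<phi> a1 \<noteq> 0" "\<phi> a2 \<noteq> 0" "\<phi> a3 \<noteq> 0"
   and m: "mset (map abs (map (\<lambda>\<mu>. minform T \<mu> (vadd (max_root T) (rho T))) L @ [a1,a2,a3]))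
         = mset (map abs (map (\<lambda>\<mu>. minform T \<mu> (rho T)) L @ [n1,n2,n3]))"
   and s: "prod_list (map sgn (map (\<lambda>\<mu>. minform T \<mu> (vadd (max_root T) (rho T))) L @ [a1,a2,a3]))
         = prod_list (map sgn (map (\<lambda>\<mu>. minform T \<mu> (rho T)) L @ [n1,n2,n3]))"
  shows "(\<Prod>\<mu>\<in>posroots T. \<phi> (minform T \<mu> (vadd (max_root T) (rho T))) / \<phi> (minform T \<mu> (rho T)))
     = \<phi> n1 / \<phi> a1 * (\<phi> n2 / \<phi> a2) * (\<phi> n3 / \<phi> a3)"
proof -
  have "(\<Prod>\<mu>\<in>posroots T. \<phi> (minform T \<mu> (vadd (max_root T) (rho T))) / \<phi> (minform T \<mu> (rho T)))
    = prod_list (map \<phi> (map (\<lambda>\<mu>. minform T \<mu> (vadd (max_root T) (rho T))) L)) / prod_list (map \<phi> (map (\<lambda>\<mu>. minform T \<mu> (rho T)) L))"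
    using assms(1,2) by (simp add: prod_list_distinct_conv_prod_set[symmetric] prod_list_div comp_def)
  also have "\<dots> = \<phi> n1 / \<phi> a1 * (\<phi> n2 / \<phi> a2) * (\<phi> n3 / \<phi> a3)"
  proof (rule final_step[OF par _ nz(2-4) m s])
    show "prod_list (map \<phi> (map (\<lambda>\<mu>. minform T \<mu> (rho T)) L)) \<noteq> 0"
      using nz(1) assms(1) by (auto simp add: prod_list_zero_iff)
  qed
  finally show ?thesis .
qed

lemma set_map_pow: "set (map set xs) = P \<Longrightarrow> set (map g (map set xs)) = {g S | S. S \<in> P}"
  by auto

definition tlE8 :: vec where "tlE8 = (\<lambda>k. if k = 7 then 1/2 else 0)"

definition LE8 :: "vec list" where
 "LE8 = [vsub (ev j) (ev i). j\<leftarrow>[0..<8], i\<leftarrow>[0..<j]] @ [vadd (ev i) (ev j). j\<leftarrow>[0..<8], i\<leftarrow>[0..<j]] @ map (\<lambda>S. halfvec 7 S tlE8) (filter (\<lambda>S. even (card S)) (map set (subseqs [0..<7])))"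

lemma setLE8: "posroots E8 = set LE8"
proof -
  have h0: "set ([vsub (ev j) (ev i). j\<leftarrow>[0..<8], i\<leftarrow>[0..<j]]) = {vsub (ev j) (ev i) | i j. i < j \<and> j < 8}"
    by fastforce
  have h1: "set ([vadd (ev i) (ev j). j\<leftarrow>[0..<8], i\<leftarrow>[0..<j]]) = {vadd (ev i) (ev j) | i j. i < j \<and> j < 8}"
    by fastforce
  have h2: "set (map (\<lambda>S. halfvec 7 S tlE8) (filter (\<lambda>S. even (card S)) (map set (subseqs [0..<7])))) = {halfvec 7 S tlE8 | S. S \<subseteq> {..<7} \<and> even (card S)}"
    proof -
    have "set (map set (subseqs [0..<7::nat])) = Pow {..<7}"
      using subseqs_powset[of "[0..<7::nat]"] by (simp add: lessThan_atLeast0)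
    then show ?thesis by auto
  qed
  show ?thesis unfolding LE8_def set_append h0 h1 h2 by (simp add: tlE8_def Un_assoc)
qed

lemma distLE8: "distinct LE8"
proof -
  have "distinct (map (\<lambda>\<mu>. map \<mu> [0..<8]) LE8)"
    by (simp add: LE8_def ev_def vsub_def vadd_def halfvec_def tlE8_def upt_rec subseqs.simps Let_def)
  then show ?thesis by (simp add: distinct_map)
qed

lemma rhoE8: "map (rho E8) [0, 1, 2, 3, 4, 5, 6, 7] = [0, 1, 2, 3, 4, 5, 6, 23]"
  by (simp add: rho_list[OF setLE8 distLE8] LE8_def ev_def vsub_def vadd_def halfvec_def tlE8_def upt_rec subseqs.simps Let_def)

lemma rhoE8': "rho E8 0 = 0" "rho E8 1 = 1" "rho E8 2 = 2" "rho E8 3 = 3" "rho E8 4 = 4" "rho E8 5 = 5" "rho E8 6 = 6" "rho E8 7 = 23"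
  using rhoE8 by (simp_all only: list.map list.inject)

lemma rhoE8'': "rho E8 (Suc 0) = 1" using rhoE8'(2) by simp

lemma euclE8: "eucl E8 x y = x 0 * y 0 + x 1 * y 1 + x 2 * y 2 + x 3 * y 3 + x 4 * y 4 + x 5 * y 5 + x 6 * y 6 + x 7 * y 7"
  by (simp add: eucl_def eval_nat_numeral lessThan_Suc)

lemma numE8: "map (\<lambda>\<mu>. minform E8 \<mu> (vadd (max_root E8) (rho E8))) LE8 = [1, 2, 1, 3, 2, 1, 4, 3, 2, 1, 5, 4, 3, 2, 1, 7, 6, 5, 4, 3, 2, 24, 23, 22, 21, 20, 19, 17, 1, 2, 3, 3, 4, 5, 4, 5, 6, 7, 5, 6, 7, 8, 9, 7, 8, 9, 10, 11, 12, 24, 25, 26, 27, 28, 29, 31, 8, 6, 5, 17, 4, 16, 15, 13, 3, 15, 14, 12, 13, 11, 10, 22, 2, 14, 13, 11, 12, 10, 9, 21, 11, 9, 8, 20, 7, 19, 18, 16, 1, 13, 12, 10, 11, 9, 8, 20, 10, 8, 7, 19, 6, 18, 17, 15, 9, 7, 6, 18, 5, 17, 16, 14, 4, 16, 15, 13, 14, 12, 11, 23]"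
  by (simp add: minform_def euclE8 rhoE8' rhoE8'' LE8_def ev_def vsub_def vadd_def halfvec_def tlE8_def upt_rec subseqs.simps Let_def lessThan_Suc)

lemma denE8: "map (\<lambda>\<mu>. minform E8 \<mu> (rho E8)) LE8 = [1, 2, 1, 3, 2, 1, 4, 3, 2, 1, 5, 4, 3, 2, 1, 6, 5, 4, 3, 2, 1, 23, 22, 21, 20, 19, 18, 17, 1, 2, 3, 3, 4, 5, 4, 5, 6, 7, 5, 6, 7, 8, 9, 6, 7, 8, 9, 10, 11, 23, 24, 25, 26, 27, 28, 29, 7, 6, 5, 16, 4, 15, 14, 13, 3, 14, 13, 12, 12, 11, 10, 21, 2, 13, 12, 11, 11, 10, 9, 20, 10, 9, 8, 19, 7, 18, 17, 16, 1, 12, 11, 10, 10, 9, 8, 19, 9, 8, 7, 18, 6, 17, 16, 15, 8, 7, 6, 17, 5, 16, 15, 14, 4, 15, 14, 13, 13, 12, 11, 22]"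
  by (simp add: minform_def euclE8 rhoE8' rhoE8'' LE8_def ev_def vsub_def vadd_def halfvec_def tlE8_def upt_rec subseqs.simps Let_def lessThan_Suc)

lemma caseE8:
  fixes \<phi> :: "real \<Rightarrow> real"
  assumes par: "(\<forall>x. \<phi> (- x) = \<phi> x) \<or> (\<forall>x. \<phi> (- x) = - \<phi> x)"
   and nz: "\<forall>\<mu>\<in>posroots E8. \<phi> (minform E8 \<mu> (rho E8)) \<noteq> 0" "\<phi> a1 \<noteq> 0" "\<phi> a2 \<noteq> 0" "\<phi> a3 \<noteq> 0"
   and v: "a1 = -1" "a2 = 6" "a3 = 10" "n1 = -31" "n2 = -24" "n3 = -20"
  shows "(\<Prod>\<mu>\<in>posroots E8. \<phi> (minform E8 \<mu> (vadd (max_root E8) (rho E8))) / \<phi> (minform E8 \<mu> (rho E8)))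
     = \<phi> n1 / \<phi> a1 * (\<phi> n2 / \<phi> a2) * (\<phi> n3 / \<phi> a3)"
  apply (rule concrete_case[OF setLE8 distLE8 par nz])
  apply (simp_all only: numE8 denE8 v)
  apply (simp_all add: add_mset_commute)
  done

definition tlE7 :: vec where "tlE7 = (\<lambda>k. if k = 6 then -1/2 else if k = 7 then 1/2 else 0)"

definition LE7 :: "vec list" where
 "LE7 = [vsub (ev j) (ev i). j\<leftarrow>[0..<6], i\<leftarrow>[0..<j]] @ [vadd (ev i) (ev j). j\<leftarrow>[0..<6], i\<leftarrow>[0..<j]] @ [vsub (ev 7) (ev 6)] @ map (\<lambda>S. halfvec 6 S tlE7) (filter (\<lambda>S. odd (card S)) (map set (subseqs [0..<6])))"

lemma setLE7: "posroots E7 = set LE7"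
proof -
  have h0: "set ([vsub (ev j) (ev i). j\<leftarrow>[0..<6], i\<leftarrow>[0..<j]]) = {vsub (ev j) (ev i) | i j. i < j \<and> j < 6}"
    by fastforce
  have h1: "set ([vadd (ev i) (ev j). j\<leftarrow>[0..<6], i\<leftarrow>[0..<j]]) = {vadd (ev i) (ev j) | i j. i < j \<and> j < 6}"
    by fastforce
  have h2: "set ([vsub (ev 7) (ev 6)]) = {vsub (ev 7) (ev 6)}"
    by fastforce
  have h3: "set (map (\<lambda>S. halfvec 6 S tlE7) (filter (\<lambda>S. odd (card S)) (map set (subseqs [0..<6])))) = {halfvec 6 S tlE7 | S. S \<subseteq> {..<6} \<and> odd (card S)}"
    proof -
    have "set (map set (subseqs [0..<6::nat])) = Pow {..<6}"
      using subseqs_powset[of "[0..<6::nat]"] by (simp add: lessThan_atLeast0)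
    then show ?thesis by auto
  qed
  show ?thesis unfolding LE7_def set_append h0 h1 h2 h3 by (simp add: tlE7_def Un_assoc)
qed

lemma distLE7: "distinct LE7"
proof -
  have "distinct (map (\<lambda>\<mu>. map \<mu> [0..<8]) LE7)"
    by (simp add: LE7_def ev_def vsub_def vadd_def halfvec_def tlE7_def upt_rec subseqs.simps Let_def)
  then show ?thesis by (simp add: distinct_map)
qed

lemma rhoE7: "map (rho E7) [0, 1, 2, 3, 4, 5, 6, 7] = [0, 1, 2, 3, 4, 5, -17/2, 17/2]"
  by (simp add: rho_list[OF setLE7 distLE7] LE7_def ev_def vsub_def vadd_def halfvec_def tlE7_def upt_rec subseqs.simps Let_def)

lemma rhoE7': "rho E7 0 = 0" "rho E7 1 = 1" "rho E7 2 = 2" "rho E7 3 = 3" "rho E7 4 = 4" "rho E7 5 = 5" "rho E7 6 = -17/2" "rho E7 7 = 17/2"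
  using rhoE7 by (simp_all only: list.map list.inject)

lemma rhoE7'': "rho E7 (Suc 0) = 1" using rhoE7'(2) by simp

lemma euclE7: "eucl E7 x y = x 0 * y 0 + x 1 * y 1 + x 2 * y 2 + x 3 * y 3 + x 4 * y 4 + x 5 * y 5 + x 6 * y 6 + x 7 * y 7"
  by (simp add: eucl_def eval_nat_numeral lessThan_Suc)

lemma numE7: "map (\<lambda>\<mu>. minform E7 \<mu> (vadd (max_root E7) (rho E7))) LE7 = [1, 2, 1, 3, 2, 1, 4, 3, 2, 1, 5, 4, 3, 2, 1, 1, 2, 3, 3, 4, 5, 4, 5, 6, 7, 5, 6, 7, 8, 9, 19, 7, 6, 5, 14, 4, 13, 12, 11, 3, 12, 11, 10, 10, 9, 8, 17, 2, 11, 10, 9, 9, 8, 7, 16, 8, 7, 6, 15, 5, 14, 13, 12]"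
  by (simp add: minform_def euclE7 rhoE7' rhoE7'' LE7_def ev_def vsub_def vadd_def halfvec_def tlE7_def upt_rec subseqs.simps Let_def lessThan_Suc)

lemma denE7: "map (\<lambda>\<mu>. minform E7 \<mu> (rho E7)) LE7 = [1, 2, 1, 3, 2, 1, 4, 3, 2, 1, 5, 4, 3, 2, 1, 1, 2, 3, 3, 4, 5, 4, 5, 6, 7, 5, 6, 7, 8, 9, 17, 6, 5, 4, 13, 3, 12, 11, 10, 2, 11, 10, 9, 9, 8, 7, 16, 1, 10, 9, 8, 8, 7, 6, 15, 7, 6, 5, 14, 4, 13, 12, 11]"
  by (simp add: minform_def euclE7 rhoE7' rhoE7'' LE7_def ev_def vsub_def vadd_def halfvec_def tlE7_def upt_rec subseqs.simps Let_def lessThan_Suc)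

lemma caseE7:
  fixes \<phi> :: "real \<Rightarrow> real"
  assumes par: "(\<forall>x. \<phi> (- x) = \<phi> x) \<or> (\<forall>x. \<phi> (- x) = - \<phi> x)"
   and nz: "\<forall>\<mu>\<in>posroots E7. \<phi> (minform E7 \<mu> (rho E7)) \<noteq> 0" "\<phi> a1 \<noteq> 0" "\<phi> a2 \<noteq> 0" "\<phi> a3 \<noteq> 0"
   and v: "a1 = -1" "a2 = 4" "a3 = 6" "n1 = -19" "n2 = -14" "n3 = -12"
  shows "(\<Prod>\<mu>\<in>posroots E7. \<phi> (minform E7 \<mu> (vadd (max_root E7) (rho E7))) / \<phi> (minform E7 \<mu> (rho E7)))
     = \<phi> n1 / \<phi> a1 * (\<phi> n2 / \<phi> a2) * (\<phi> n3 / \<phi> a3)"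
  apply (rule concrete_case[OF setLE7 distLE7 par nz])
  apply (simp_all only: numE7 denE7 v)
  apply (simp_all add: add_mset_commute)
  done

definition tlE6 :: vec where "tlE6 = (\<lambda>k. if k = 5 \<or> k = 6 then -1/2 else if k = 7 then 1/2 else 0)"

definition LE6 :: "vec list" where
 "LE6 = [vsub (ev j) (ev i). j\<leftarrow>[0..<5], i\<leftarrow>[0..<j]] @ [vadd (ev i) (ev j). j\<leftarrow>[0..<5], i\<leftarrow>[0..<j]] @ map (\<lambda>S. halfvec 5 S tlE6) (filter (\<lambda>S. even (card S)) (map set (subseqs [0..<5])))"

lemma setLE6: "posroots E6 = set LE6"
proof -
  have h0: "set ([vsub (ev j) (ev i). j\<leftarrow>[0..<5], i\<leftarrow>[0..<j]]) = {vsub (ev j) (ev i) | i j. i < j \<and> j < 5}"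
    by fastforce
  have h1: "set ([vadd (ev i) (ev j). j\<leftarrow>[0..<5], i\<leftarrow>[0..<j]]) = {vadd (ev i) (ev j) | i j. i < j \<and> j < 5}"
    by fastforce
  have h2: "set (map (\<lambda>S. halfvec 5 S tlE6) (filter (\<lambda>S. even (card S)) (map set (subseqs [0..<5])))) = {halfvec 5 S tlE6 | S. S \<subseteq> {..<5} \<and> even (card S)}"
    proof -
    have "set (map set (subseqs [0..<5::nat])) = Pow {..<5}"
      using subseqs_powset[of "[0..<5::nat]"] by (simp add: lessThan_atLeast0)
    then show ?thesis by auto
  qed
  show ?thesis unfolding LE6_def set_append h0 h1 h2 by (simp add: tlE6_def Un_assoc)
qed

lemma distLE6: "distinct LE6"
proof -
  have "distinct (map (\<lambda>\<mu>. map \<mu> [0..<8]) LE6)"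
    by (simp add: LE6_def ev_def vsub_def vadd_def halfvec_def tlE6_def upt_rec subseqs.simps Let_def)
  then show ?thesis by (simp add: distinct_map)
qed

lemma rhoE6: "map (rho E6) [0, 1, 2, 3, 4, 5, 6, 7] = [0, 1, 2, 3, 4, -4, -4, 4]"
  by (simp add: rho_list[OF setLE6 distLE6] LE6_def ev_def vsub_def vadd_def halfvec_def tlE6_def upt_rec subseqs.simps Let_def)

lemma rhoE6': "rho E6 0 = 0" "rho E6 1 = 1" "rho E6 2 = 2" "rho E6 3 = 3" "rho E6 4 = 4" "rho E6 5 = -4" "rho E6 6 = -4" "rho E6 7 = 4"
  using rhoE6 by (simp_all only: list.map list.inject)

lemma rhoE6'': "rho E6 (Suc 0) = 1" using rhoE6'(2) by simp

lemma euclE6: "eucl E6 x y = x 0 * y 0 + x 1 * y 1 + x 2 * y 2 + x 3 * y 3 + x 4 * y 4 + x 5 * y 5 + x 6 * y 6 + x 7 * y 7"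
  by (simp add: eucl_def eval_nat_numeral lessThan_Suc)

lemma numE6: "map (\<lambda>\<mu>. minform E6 \<mu> (vadd (max_root E6) (rho E6))) LE6 = [1, 2, 1, 3, 2, 1, 4, 3, 2, 1, 2, 3, 4, 4, 5, 6, 5, 6, 7, 8, 5, 4, 3, 11, 2, 10, 9, 8, 1, 9, 8, 7, 7, 6, 5, 13]"
  by (simp add: minform_def euclE6 rhoE6' rhoE6'' LE6_def ev_def vsub_def vadd_def halfvec_def tlE6_def upt_rec subseqs.simps Let_def lessThan_Suc)

lemma denE6: "map (\<lambda>\<mu>. minform E6 \<mu> (rho E6)) LE6 = [1, 2, 1, 3, 2, 1, 4, 3, 2, 1, 1, 2, 3, 3, 4, 5, 4, 5, 6, 7, 5, 4, 3, 10, 2, 9, 8, 7, 1, 8, 7, 6, 6, 5, 4, 11]"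
  by (simp add: minform_def euclE6 rhoE6' rhoE6'' LE6_def ev_def vsub_def vadd_def halfvec_def tlE6_def upt_rec subseqs.simps Let_def lessThan_Suc)

lemma caseE6:
  fixes \<phi> :: "real \<Rightarrow> real"
  assumes par: "(\<forall>x. \<phi> (- x) = \<phi> x) \<or> (\<forall>x. \<phi> (- x) = - \<phi> x)"
   and nz: "\<forall>\<mu>\<in>posroots E6. \<phi> (minform E6 \<mu> (rho E6)) \<noteq> 0" "\<phi> a1 \<noteq> 0" "\<phi> a2 \<noteq> 0" "\<phi> a3 \<noteq> 0"
   and v: "a1 = -1" "a2 = 3" "a3 = 4" "n1 = -13" "n2 = -9" "n3 = -8"
  shows "(\<Prod>\<mu>\<in>posroots E6. \<phi> (minform E6 \<mu> (vadd (max_root E6) (rho E6))) / \<phi> (minform E6 \<mu> (rho E6)))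
     = \<phi> n1 / \<phi> a1 * (\<phi> n2 / \<phi> a2) * (\<phi> n3 / \<phi> a3)"
  apply (rule concrete_case[OF setLE6 distLE6 par nz])
  apply (simp_all only: numE6 denE6 v)
  apply (simp_all add: add_mset_commute)
  done

definition tlF4 :: vec where "tlF4 = (\<lambda>_. 0)"

definition LF4 :: "vec list" where
 "LF4 = [vsub (ev i) (ev j). j\<leftarrow>[0..<4], i\<leftarrow>[0..<j]] @ [vadd (ev i) (ev j). j\<leftarrow>[0..<4], i\<leftarrow>[0..<j]] @ [ev i. i\<leftarrow>[0..<4]] @ map (\<lambda>S. halfvec 4 S tlF4) (map set (subseqs [1,2,3]))"

lemma setLF4: "posroots F4 = set LF4"
proof -
  have h0: "set ([vsub (ev i) (ev j). j\<leftarrow>[0..<4], i\<leftarrow>[0..<j]]) = {vsub (ev i) (ev j) | i j. i < j \<and> j < 4}"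
    by fastforce
  have h1: "set ([vadd (ev i) (ev j). j\<leftarrow>[0..<4], i\<leftarrow>[0..<j]]) = {vadd (ev i) (ev j) | i j. i < j \<and> j < 4}"
    by fastforce
  have h2: "set ([ev i. i\<leftarrow>[0..<4]]) = {ev i | i. i < 4}"
    by fastforce
  have h3: "set (map (\<lambda>S. halfvec 4 S tlF4) (map set (subseqs [1,2,3]))) = {halfvec 4 S tlF4 | S. S \<subseteq> {1,2,3}}"
    proof -
    have "set (map set (subseqs [1,2,3::nat])) = Pow {1,2,3}"
      using subseqs_powset[of "[1,2,3::nat]"] by (simp add: lessThan_atLeast0)
    then have "set (map (\<lambda>S. halfvec 4 S tlF4) (map set (subseqs [1,2,3]))) = {halfvec 4 S tlF4 | S. S \<in> Pow {1,2,3}}"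
      by (rule set_map_pow)
    then show ?thesis by (simp only: Pow_iff)
  qed
  show ?thesis unfolding LF4_def set_append h0 h1 h2 h3 by (simp add: tlF4_def Un_assoc)
qed

lemma distLF4: "distinct LF4"
proof -
  have "distinct (map (\<lambda>\<mu>. map \<mu> [0..<4]) LF4)"
    by (simp add: LF4_def ev_def vsub_def vadd_def halfvec_def tlF4_def upt_rec subseqs.simps Let_def)
  then show ?thesis by (simp add: distinct_map)
qed

lemma rhoF4: "map (rho F4) [0, 1, 2, 3] = [11/2, 5/2, 3/2, 1/2]"
  by (simp add: rho_list[OF setLF4 distLF4] LF4_def ev_def vsub_def vadd_def halfvec_def tlF4_def upt_rec subseqs.simps Let_def)

lemma rhoF4': "rho F4 0 = 11/2" "rho F4 1 = 5/2" "rho F4 2 = 3/2" "rho F4 3 = 1/2"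
  using rhoF4 by (simp_all only: list.map list.inject)

lemma rhoF4'': "rho F4 (Suc 0) = 5/2" using rhoF4'(2) by simp

lemma euclF4: "eucl F4 x y = x 0 * y 0 + x 1 * y 1 + x 2 * y 2 + x 3 * y 3"
  by (simp add: eucl_def eval_nat_numeral lessThan_Suc)

lemma numF4: "map (\<lambda>\<mu>. minform F4 \<mu> (vadd (max_root F4) (rho F4))) LF4 = [3, 5, 2, 6, 3, 1, 10, 8, 5, 7, 4, 2, 13/2, 7/2, 3/2, 1/2, 1/2, 1, 2, 5/2, 4, 9/2, 11/2, 6]"
  by (simp add: minform_def euclF4 rhoF4' rhoF4'' LF4_def ev_def vsub_def vadd_def halfvec_def tlF4_def upt_rec subseqs.simps Let_def lessThan_Suc)

lemma denF4: "map (\<lambda>\<mu>. minform F4 \<mu> (rho F4)) LF4 = [3, 4, 1, 5, 2, 1, 8, 7, 4, 6, 3, 2, 11/2, 5/2, 3/2, 1/2, 1/2, 1, 2, 5/2, 3, 7/2, 9/2, 5]"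
  by (simp add: minform_def euclF4 rhoF4' rhoF4'' LF4_def ev_def vsub_def vadd_def halfvec_def tlF4_def upt_rec subseqs.simps Let_def lessThan_Suc)

lemma caseF4:
  fixes \<phi> :: "real \<Rightarrow> real"
  assumes par: "(\<forall>x. \<phi> (- x) = \<phi> x) \<or> (\<forall>x. \<phi> (- x) = - \<phi> x)"
   and nz: "\<forall>\<mu>\<in>posroots F4. \<phi> (minform F4 \<mu> (rho F4)) \<noteq> 0" "\<phi> a1 \<noteq> 0" "\<phi> a2 \<noteq> 0" "\<phi> a3 \<noteq> 0"
   and v: "a1 = -1" "a2 = 5/2" "a3 = 3" "n1 = -10" "n2 = -13/2" "n3 = -6"
  shows "(\<Prod>\<mu>\<in>posroots F4. \<phi> (minform F4 \<mu> (vadd (max_root F4) (rho F4))) / \<phi> (minform F4 \<mu> (rho F4)))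
     = \<phi> n1 / \<phi> a1 * (\<phi> n2 / \<phi> a2) * (\<phi> n3 / \<phi> a3)"
  apply (rule concrete_case[OF setLF4 distLF4 par nz])
  apply (simp_all only: numF4 denF4 v)
  apply (simp_all add: add_mset_commute)
  done

definition LG2 :: "vec list" where
  "LG2 = [vsub (ev 0) (ev 1),
                  vadd (vscale (-2) (ev 0)) (vadd (ev 1) (ev 2)),
                  vsub (ev 2) (ev 0),
                  vsub (ev 2) (ev 1),
                  vadd (vsub (ev 0) (vscale 2 (ev 1))) (ev 2),
                  vsub (vscale 2 (ev 2)) (vadd (ev 0) (ev 1))]"

lemma setLG2: "posroots G2 = set LG2"
  by (simp add: LG2_def)

lemma distLG2: "distinct LG2"
proof -
  have "distinct (map (\<lambda>\<mu>. map \<mu> [0..<3]) LG2)"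
    by (simp add: LG2_def ev_def vsub_def vadd_def vscale_def upt_rec)
  then show ?thesis by (simp add: distinct_map)
qed

lemma rhoG2: "map (rho G2) [0, 1, 2] = [-1, -2, 3]"
  by (simp add: rho_list[OF setLG2 distLG2] LG2_def ev_def vsub_def vadd_def vscale_def)

lemma rhoG2': "rho G2 0 = -1" "rho G2 1 = -2" "rho G2 2 = 3"
  using rhoG2 by (simp_all only: list.map list.inject)

lemma rhoG2'': "rho G2 (Suc 0) = -2" using rhoG2'(2) by simp

lemma euclG2: "eucl G2 x y = x 0 * y 0 + x 1 * y 1 + x 2 * y 2"
  by (simp add: eucl_def eval_nat_numeral lessThan_Suc)

lemma numG2: "map (\<lambda>\<mu>. minform G2 \<mu> (vadd (max_root G2) (rho G2))) LG2 = [1/3, 2, 7/3, 8/3, 3, 5]"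
  by (simp add: minform_def euclG2 rhoG2' rhoG2'' LG2_def ev_def vsub_def vadd_def vscale_def)

lemma denG2: "map (\<lambda>\<mu>. minform G2 \<mu> (rho G2)) LG2 = [1/3, 1, 4/3, 5/3, 2, 3]"
  by (simp add: minform_def euclG2 rhoG2' rhoG2'' LG2_def ev_def vsub_def vadd_def vscale_def)

lemma caseG2:
  fixes \<phi> :: "real \<Rightarrow> real"
  assumes par: "(\<forall>x. \<phi> (- x) = \<phi> x) \<or> (\<forall>x. \<phi> (- x) = - \<phi> x)"
   and nz: "\<forall>\<mu>\<in>posroots G2. \<phi> (minform G2 \<mu> (rho G2)) \<noteq> 0" "\<phi> a1 \<noteq> 0" "\<phi> a2 \<noteq> 0" "\<phi> a3 \<noteq> 0"
   and v: "a1 = -1" "a2 = 5/3" "a3 = 4/3" "n1 = -5" "n2 = -7/3" "n3 = -8/3"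
  shows "(\<Prod>\<mu>\<in>posroots G2. \<phi> (minform G2 \<mu> (vadd (max_root G2) (rho G2))) / \<phi> (minform G2 \<mu> (rho G2)))
     = \<phi> n1 / \<phi> a1 * (\<phi> n2 / \<phi> a2) * (\<phi> n3 / \<phi> a3)"
  apply (rule concrete_case[OF setLG2 distLG2 par nz])
  apply (simp_all only: numG2 denG2 v)
  apply (simp_all add: add_mset_commute)
  done




definition Pr :: "nat \<Rightarrow> (nat \<times> nat) set" where "Pr n = {(i,j). i < j \<and> j < n}"

lemma Pr_Suc: "Pr (Suc n) = Pr n \<union> (\<lambda>i. (i,n)) ` {..<n}"
  unfolding Pr_def by auto

lemma Pr_0: "Pr 0 = {}" unfolding Pr_def by auto

lemma finite_Pr: "finite (Pr n)"
  by (rule finite_subset[of _ "{..<n} \<times> {..<n}"]) (auto simp: Pr_def)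

lemma Pr_disj: "Pr n \<inter> (\<lambda>i. (i,n)) ` {..<n} = {}"
  unfolding Pr_def by auto

lemma prod_Pr: "(\<Prod>p\<in>Pr n. F p) = (\<Prod>j<n. \<Prod>i<j. F (i,j))"
proof (induction n)
  case 0 then show ?case by (simp add: Pr_0)
next
  case (Suc n)
  have "(\<Prod>p\<in>Pr (Suc n). F p) = (\<Prod>p\<in>Pr n. F p) * (\<Prod>p\<in>(\<lambda>i. (i,n)) ` {..<n}. F p)"
    unfolding Pr_Suc by (rule prod.union_disjoint) (simp_all add: finite_Pr Pr_disj)
  also have "(\<Prod>p\<in>(\<lambda>i. (i,n)) ` {..<n}. F p) = (\<Prod>i<n. F (i,n))"
    by (subst prod.reindex) (auto simp: inj_on_def)
  finally show ?case using Suc by simp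
qed

lemma sum_Pr: "(\<Sum>p\<in>Pr n. F p) = (\<Sum>j<n. \<Sum>i<j. F (i,j))"
proof (induction n)
  case 0 then show ?case by (simp add: Pr_0)
next
  case (Suc n)
  have "(\<Sum>p\<in>Pr (Suc n). F p) = (\<Sum>p\<in>Pr n. F p) + (\<Sum>p\<in>(\<lambda>i. (i,n)) ` {..<n}. F p)"
    unfolding Pr_Suc by (rule sum.union_disjoint) (simp_all add: finite_Pr Pr_disj)
  also have "(\<Sum>p\<in>(\<lambda>i. (i,n)) ` {..<n}. F p) = (\<Sum>i<n. F (i,n))"
    by (subst sum.reindex) (auto simp: inj_on_def)
  finally show ?case using Suc by simp
qed

lemma sum_Pr_fst_ind: "(\<Sum>p\<in>Pr n. (if k = fst p then 1 else 0)::real) = (if k < n then real (n - 1 - k) else 0)"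
proof (induction n)
  case 0 then show ?case by (simp add: Pr_0)
next
  case (Suc n)
  have "(\<Sum>p\<in>Pr (Suc n). (if k = fst p then 1 else 0)::real) = (\<Sum>p\<in>Pr n. (if k = fst p then 1 else 0)) + (\<Sum>p\<in>(\<lambda>i. (i,n)) ` {..<n}. (if k = fst p then 1 else 0))"
    unfolding Pr_Suc by (rule sum.union_disjoint) (simp_all add: finite_Pr Pr_disj)
  also have "(\<Sum>p\<in>(\<lambda>i. (i,n)) ` {..<n}. (if k = fst p then 1 else 0)::real) = (if k < n then 1 else 0)"
    by (subst sum.reindex) (auto simp: inj_on_def)
  finally show ?case using Suc by (auto simp: of_nat_diff)
qed

lemma sum_Pr_snd_ind: "(\<Sum>p\<in>Pr n. (if k = snd p then 1 else 0)::real) = (if k < n then real k else 0)"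
proof (induction n)
  case 0 then show ?case by (simp add: Pr_0)
next
  case (Suc n)
  have "(\<Sum>p\<in>Pr (Suc n). (if k = snd p then 1 else 0)::real) = (\<Sum>p\<in>Pr n. (if k = snd p then 1 else 0)) + (\<Sum>p\<in>(\<lambda>i. (i,n)) ` {..<n}. (if k = snd p then 1 else 0))"
    unfolding Pr_Suc by (rule sum.union_disjoint) (simp_all add: finite_Pr Pr_disj)
  also have "(\<Sum>p\<in>(\<lambda>i. (i,n)) ` {..<n}. (if k = snd p then 1 else 0)::real) = (if k = n then real n else 0)"
    by (subst sum.reindex) (auto simp: inj_on_def)
  finally show ?case using Suc by auto
qed

lemma tele_up:
  fixes g :: "nat \<Rightarrow> real"
  assumes "\<forall>j. a \<le> j \<and> j \<le> b \<longrightarrow> g j \<noteq> 0" "a \<le> b"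
  shows "(\<Prod>j\<in>{a..<b}. g (Suc j) / g j) = g b / g a"
  using assms
proof (induction b)
  case 0 then show ?case by simp
next
  case (Suc b)
  show ?case
  proof (cases "a = Suc b")
    case True then show ?thesis using Suc.prems by simp
  next
    case False
    then have "a \<le> b" using Suc.prems by simp
    then have "(\<Prod>j\<in>{a..<Suc b}. g (Suc j) / g j) = g b / g a * (g (Suc b) / g b)"
      using Suc by (simp add: prod.atLeastLessThan_Suc)
    then show ?thesis using Suc.prems \<open>a \<le> b\<close> by auto
  qed
qed

lemma tele_down:
  fixes g :: "nat \<Rightarrow> real"
  assumes "\<forall>j. a \<le> j \<and> j \<le> b \<longrightarrow> g j \<noteq> 0" "a \<le> b"
  shows "(\<Prod>j\<in>{a..<b}. g j / g (Suc j)) = g a / g b"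
proof -
  have "(\<Prod>j\<in>{a..<b}. g j / g (Suc j)) = inverse (\<Prod>j\<in>{a..<b}. g (Suc j) / g j)"
    by (simp add: prod_dividef)
  also have "\<dots> = g a / g b" using tele_up[OF assms] by simp
  finally show ?thesis .
qed

lemma ev_apply: "ev i k = (if k = i then 1 else 0)" by (simp add: ev_def)

lemma eucl_ev: "eucl T (ev i) x = (if i < amb_dim T then x i else 0)"
  by (simp add: eucl_def ev_def if_distrib[of "\<lambda>c. c * _"] cong: if_cong)

lemma eucl_vsub: "eucl T (vsub u v) x = eucl T u x - eucl T v x"
  by (simp add: eucl_def vsub_def left_diff_distrib sum_subtractf)
lemma eucl_vadd: "eucl T (vadd u v) x = eucl T u x + eucl T v x"
  by (simp add: eucl_def vadd_def distrib_right sum.distrib)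
lemma eucl_vscale: "eucl T (vscale c u) x = c * eucl T u x"
  by (simp add: eucl_def vscale_def sum_distrib_left mult.assoc)

lemma inj_vsub: "inj_on (\<lambda>(i,j). vsub (ev i) (ev j)) (Pr n)"
proof (rule inj_onI, clarsimp simp: Pr_def)
  fix i j i' j' :: nat
  assume h: "vsub (ev i) (ev j) = vsub (ev i') (ev j')" "i < j" "i' < j'"
  have "vsub (ev i) (ev j) i = vsub (ev i') (ev j') i" "vsub (ev i) (ev j) j = vsub (ev i') (ev j') j"
    using h(1) by auto
  then show "i = i' \<and> j = j'" using h(2,3) by (auto simp: vsub_def ev_def split: if_splits)
qed

lemma inj_vadd: "inj_on (\<lambda>(i,j). vadd (ev i) (ev j)) (Pr n)"
proof (rule inj_onI, clarsimp simp: Pr_def)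
  fix i j i' j' :: nat
  assume h: "vadd (ev i) (ev j) = vadd (ev i') (ev j')" "i < j" "i' < j'"
  have "vadd (ev i) (ev j) i = vadd (ev i') (ev j') i" "vadd (ev i) (ev j) j = vadd (ev i') (ev j') j"
     "vadd (ev i) (ev j) i' = vadd (ev i') (ev j') i'"
    using h(1) by auto
  then show "i = i' \<and> j = j'" using h(2,3) by (auto simp: vadd_def ev_def split: if_splits)
qed

lemma inj_vsub': "inj_on (\<lambda>p. vsub (ev (fst p)) (ev (snd p))) (Pr n)"
  using inj_vsub[of n] by (simp add: split_def)
lemma inj_vadd': "inj_on (\<lambda>p. vadd (ev (fst p)) (ev (snd p))) (Pr n)"
  using inj_vadd[of n] by (simp add: split_def)

lemma img_vsub: "{vsub (ev i) (ev j) | i j. i < j \<and> j < n} = (\<lambda>(i,j). vsub (ev i) (ev j)) ` Pr n"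
  unfolding Pr_def by auto
lemma img_vadd: "{vadd (ev i) (ev j) | i j. i < j \<and> j < n} = (\<lambda>(i,j). vadd (ev i) (ev j)) ` Pr n"
  unfolding Pr_def by auto

lemma disj_sub_add: "(\<lambda>(i,j). vsub (ev i) (ev j)) ` Pr n \<inter> (\<lambda>(i,j). vadd (ev i) (ev j)) ` Pr m = {}"
proof -
  { fix i j i' j' :: nat assume h: "vsub (ev i) (ev j) = vadd (ev i') (ev j')" "i < j"
    have "vsub (ev i) (ev j) j = vadd (ev i') (ev j') j" using h by simp
    then have False using h(2) by (auto simp: vsub_def vadd_def ev_def split: if_splits) }
  then show ?thesis by (auto simp: Pr_def)
qed

lemma parity_sign:
  fixes \<phi> :: "real \<Rightarrow> real"
  assumes "(\<forall>x. \<phi> (- x) = \<phi> x) \<or> (\<forall>x. \<phi> (- x) = - \<phi> x)"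
  obtains s where "s * s = 1" "\<And>x. \<phi> (- x) = s * \<phi> x"
proof -
  from assms show ?thesis
  proof
    assume "\<forall>x. \<phi> (- x) = \<phi> x" then show ?thesis using that[of 1] by auto
  next
    assume "\<forall>x. \<phi> (- x) = - \<phi> x" then show ?thesis using that[of "-1"] by auto
  qed
qed

lemma posroots_A: "posroots (A n) = (\<lambda>(i,j). vsub (ev i) (ev j)) ` Pr (Suc n)"
  unfolding Pr_def by (auto simp: less_Suc_eq_le)

lemma rho_A: "k \<le> n \<Longrightarrow> rho (A n) k = real n / 2 - real k"
proof -
  assume k: "k \<le> n"
  have "(\<Sum>\<mu>\<in>posroots (A n). \<mu> k) = (\<Sum>p\<in>Pr (Suc n). (if k = fst p then 1 else 0) - (if k = snd p then 1 else 0))"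
    unfolding posroots_A by (subst sum.reindex[OF inj_vsub]) (auto simp: vsub_def ev_def intro!: sum.cong)
  also have "\<dots> = real (n - k) - real k"
    using k by (simp add: sum_subtractf sum_Pr_fst_ind sum_Pr_snd_ind)
  finally show ?thesis using k by (simp add: rho_def of_nat_diff)
qed

lemma minform_A:
  assumes "1 \<le> n" "i \<le> n" "j \<le> n"
  shows "minform (A n) (vsub (ev i) (ev j)) x = x i - x j"
proof -
  have "eucl (A n) (max_root (A n)) (max_root (A n)) = 2"
    using assms by (simp only: max_root.simps eucl_vsub eucl_ev amb_dim.simps) (simp add: vsub_def ev_def)
  then show ?thesis using assms by (simp add: minform_def eucl_vsub eucl_ev)
qed

lemma caseA:
  fixes \<phi> :: "real \<Rightarrow> real"
  assumes n: "1 \<le> n"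
   and par: "(\<forall>x. \<phi> (- x) = \<phi> x) \<or> (\<forall>x. \<phi> (- x) = - \<phi> x)"
   and nz: "\<forall>\<mu>\<in>posroots (A n). \<phi> (minform (A n) \<mu> (rho (A n))) \<noteq> 0" "\<phi> (\<alpha>/2) \<noteq> 0" "\<phi> (\<beta>/2) \<noteq> 0" "\<phi> (\<gamma>/2) \<noteq> 0"
   and v: "\<alpha> = -2" "\<beta> = 2" "\<gamma> = real n + 1" "t = \<alpha> + \<beta> + \<gamma>"
  shows "(\<Prod>\<mu>\<in>posroots (A n). \<phi> (minform (A n) \<mu> (vadd (max_root (A n)) (rho (A n)))) / \<phi> (minform (A n) \<mu> (rho (A n))))
     = \<phi> ((\<alpha> - 2 * t) / 2) / \<phi> (\<alpha> / 2) * (\<phi> ((\<beta> - 2 * t) / 2) / \<phi> (\<beta> / 2)) * (\<phi> ((\<gamma> - 2 * t) / 2) / \<phi> (\<gamma> / 2))"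
proof -
  obtain s where s: "s * s = 1" "\<And>x. \<phi> (- x) = s * \<phi> x" using parity_sign[OF par] by blast
  define G where "G = (\<lambda>(i::nat,j::nat). \<phi> (real j - real i + (if i = 0 then 1 else 0) + (if j = n then 1 else 0)) / \<phi> (real j - real i))"
  have nzm: "\<phi> (real m) \<noteq> 0" if "1 \<le> m" "m \<le> n" for m
  proof -
    have "0 < m" using that by simp
    have "vsub (ev 0) (ev m) \<in> posroots (A n)" by (simp only: posroots.simps) (use that \<open>0 < m\<close> in blast)
    then have "\<phi> (minform (A n) (vsub (ev 0) (ev m)) (rho (A n))) \<noteq> 0" using nz(1) by blast
    then show ?thesis using that n by (simp add: minform_A rho_A)
  qed
  have pt: "\<phi> (minform (A n) (vsub (ev i) (ev j)) (vadd (max_root (A n)) (rho (A n)))) / \<phi> (minform (A n) (vsub (ev i) (ev j)) (rho (A n))) = G (i, j)"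
    if ij: "i < j" "j \<le> n" for i j
  proof -
    have m1: "minform (A n) (vsub (ev i) (ev j)) (vadd (max_root (A n)) (rho (A n))) = vadd (max_root (A n)) (rho (A n)) i - vadd (max_root (A n)) (rho (A n)) j"
      by (rule minform_A) (use ij n in auto)
    have m2: "minform (A n) (vsub (ev i) (ev j)) (rho (A n)) = rho (A n) i - rho (A n) j"
      by (rule minform_A) (use ij n in auto)
    show ?thesis unfolding m1 m2 using ij n by (simp add: rho_A G_def vadd_def vsub_def ev_def algebra_simps)
  qed
  have "(\<Prod>\<mu>\<in>posroots (A n). \<phi> (minform (A n) \<mu> (vadd (max_root (A n)) (rho (A n)))) / \<phi> (minform (A n) \<mu> (rho (A n))))
     = (\<Prod>p\<in>Pr (Suc n). G p)"
    unfolding posroots_A by (subst prod.reindex[OF inj_vsub], rule prod.cong[OF refl]) (auto simp: Pr_def less_Suc_eq_le simp del: max_root.simps intro: pt)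
  also have "\<dots> = (\<Prod>j<n. \<Prod>i<j. G (i,j)) * (\<Prod>i<n. G (i,n))"
    by (simp add: prod_Pr)
  also have "(\<Prod>j<n. \<Prod>i<j. G (i,j)) = \<phi> (real n) / \<phi> 1"
  proof -
    have inner: "(\<Prod>i<j. G (i,j)) = \<phi> (real (Suc j)) / \<phi> (real j)" if "1 \<le> j" "j < n" for j
    proof -
      have "(\<Prod>i<j. G (i,j)) = G (0,j) * (\<Prod>i\<in>{1..<j}. G (i,j))"
        using that by (simp add: lessThan_atLeast0 prod.atLeast_Suc_lessThan)
      also have "(\<Prod>i\<in>{1..<j}. G (i,j)) = 1"
      proof (rule prod.neutral, rule ballI)
        fix i assume i: "i \<in> {1..<j}"
        have e: "real j - real i = real (j - i)" using i by (simp add: of_nat_diff)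
        have "\<phi> (real (j - i)) \<noteq> 0" by (rule nzm) (use i that in auto)
        then show "G (i,j) = 1" using i that unfolding G_def e by simp
      qed
      finally show ?thesis using that by (simp add: G_def add.commute)
    qed
    have "(\<Prod>j<n. \<Prod>i<j. G (i,j)) = (\<Prod>j\<in>{1..<n}. \<Prod>i<j. G (i,j))"
      using n by (simp add: lessThan_atLeast0 prod.atLeast_Suc_lessThan)
    also have "\<dots> = (\<Prod>j\<in>{1..<n}. \<phi> (real (Suc j)) / \<phi> (real j))"
      by (rule prod.cong) (auto simp: inner)
    also have "\<dots> = \<phi> (real n) / \<phi> (real 1)"
      by (rule tele_up[where g = "\<lambda>j. \<phi> (real j)"]) (use n nzm in auto)
    finally show ?thesis by simp
  qed
  also have "(\<Prod>i<n. G (i,n)) = \<phi> (real n + 2) / \<phi> (real n) * (\<phi> (real n) / \<phi> 1)"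
  proof -
    have "(\<Prod>i<n. G (i,n)) = G (0,n) * (\<Prod>i\<in>{1..<n}. G (i,n))"
      using n by (simp add: lessThan_atLeast0 prod.atLeast_Suc_lessThan)
    also have "(\<Prod>i\<in>{1..<n}. G (i,n)) = (\<Prod>i\<in>{1..<n}. \<phi> (real n + 1 - real i) / \<phi> (real n + 1 - real (Suc i)))"
    proof (rule prod.cong[OF refl])
      fix i assume i: "i \<in> {1..<n}"
      have a: "real n - real i + (if i = 0 then 1 else 0) + (if n = n then 1 else 0) = real n + 1 - real i" using i by simp
      have b: "real n + 1 - real (Suc i) = real n - real i" by simp
      show "G (i,n) = \<phi> (real n + 1 - real i) / \<phi> (real n + 1 - real (Suc i))"
        by (simp only: G_def prod.case a b)
    qed
    also have "\<dots> = \<phi> (real n + 1 - real 1) / \<phi> (real n + 1 - real n)"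
    proof (rule tele_down[where g = "\<lambda>i. \<phi> (real n + 1 - real i)"])
      show "\<forall>j. 1 \<le> j \<and> j \<le> n \<longrightarrow> \<phi> (real n + 1 - real j) \<noteq> 0"
      proof (intro allI impI)
        fix j assume "1 \<le> j \<and> j \<le> n"
        then have "real n + 1 - real j = real (n + 1 - j)" by (simp add: of_nat_diff)
        moreover have "\<phi> (real (n + 1 - j)) \<noteq> 0" using \<open>1 \<le> j \<and> j \<le> n\<close> by (intro nzm) auto
        ultimately show "\<phi> (real n + 1 - real j) \<noteq> 0" by simp
      qed
    qed (use n in auto)
    finally show ?thesis using n by (simp add: G_def add.commute)
  qed
  finally have L: "(\<Prod>\<mu>\<in>posroots (A n). \<phi> (minform (A n) \<mu> (vadd (max_root (A n)) (rho (A n)))) / \<phi> (minform (A n) \<mu> (rho (A n))))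
     = \<phi> (real n) / \<phi> 1 * (\<phi> (real n + 2) / \<phi> (real n) * (\<phi> (real n) / \<phi> 1))" .
  have e1: "(\<alpha> - 2 * t) / 2 = - (real n + 2)" using v by (simp add: field_simps)
  have e2: "\<alpha> / 2 = - 1" using v by simp
  have e3: "(\<beta> - 2 * t) / 2 = - real n" using v by (simp add: field_simps)
  have e4: "(\<gamma> - 2 * t) / 2 = - ((real n + 1) / 2)" using v by (simp add: field_simps)
  have r1: "\<phi> ((\<alpha> - 2 * t) / 2) = s * \<phi> (real n + 2)" unfolding e1 by (rule s(2))
  have r2: "\<phi> (\<alpha> / 2) = s * \<phi> 1" unfolding e2 by (rule s(2))
  have r3: "\<phi> ((\<beta> - 2 * t) / 2) = s * \<phi> (real n)" unfolding e3 by (rule s(2))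
  have r4: "\<phi> ((\<gamma> - 2 * t) / 2) = s * \<phi> ((real n + 1) / 2)" unfolding e4 by (rule s(2))
  have n1: "\<phi> 1 \<noteq> 0" using nzm[of 1] n by simp
  have nn: "\<phi> (real n) \<noteq> 0" using nzm[of n] n by simp
  have ng: "\<phi> ((real n + 1) / 2) \<noteq> 0" using nz(4) v by simp
  have s0: "s \<noteq> 0" using s(1) by auto
  show ?thesis unfolding L r1 r2 r3 r4 using v n1 nn ng s0 s(1)
    by (simp add: field_simps)
qed

lemma tele_up':
  fixes g :: "nat \<Rightarrow> real"
  assumes "\<forall>j. a \<le> j \<and> j < b \<longrightarrow> g j \<noteq> 0" "a < b"
  shows "(\<Prod>j\<in>{a..<b}. g (Suc j) / g j) = g b / g a"
  using assms(2,1)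
proof (induction b)
  case 0 then show ?case by simp
next
  case (Suc b)
  show ?case
  proof (cases "a = b")
    case True then show ?thesis using Suc.prems by simp
  next
    case False
    then have ab: "a < b" using Suc.prems by simp
    have "(\<Prod>j\<in>{a..<Suc b}. g (Suc j) / g j) = g b / g a * (g (Suc b) / g b)"
      using Suc ab by (simp add: prod.atLeastLessThan_Suc)
    then show ?thesis using Suc.prems ab by auto
  qed
qed

lemma tele_down':
  fixes g :: "nat \<Rightarrow> real"
  assumes "\<forall>j. a < j \<and> j \<le> b \<longrightarrow> g j \<noteq> 0" "a < b"
  shows "(\<Prod>j\<in>{a..<b}. g j / g (Suc j)) = g a / g b"
  using assms(2,1)
proof (induction b)
  case 0 then show ?case by simp
next
  case (Suc b)
  show ?case
  proof (cases "a = b")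
    case True then show ?thesis by simp
  next
    case False
    then have ab: "a < b" using Suc.prems by simp
    have "(\<Prod>j\<in>{a..<Suc b}. g j / g (Suc j)) = g a / g b * (g b / g (Suc b))"
      using Suc ab by (simp add: prod.atLeastLessThan_Suc)
    then show ?thesis using Suc.prems ab by auto
  qed
qed

lemma pairs01:
  assumes "2 \<le> n" "\<And>i j. 2 \<le> i \<Longrightarrow> i < j \<Longrightarrow> j < n \<Longrightarrow> F (i,j) = 1"
  shows "(\<Prod>p\<in>Pr n. F p) = F (0,1) * (\<Prod>j\<in>{2..<n}. F (0,j) * F (1,j))"
proof -
  have inner: "(\<Prod>i<j. F (i,j)) = F (0,j) * F (1,j)" if "2 \<le> j" "j < n" for j
  proof -
    have "(\<Prod>i<j. F (i,j)) = F (0,j) * (F (1,j) * (\<Prod>i\<in>{2..<j}. F (i,j)))"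
      using that by (simp add: lessThan_atLeast0 prod.atLeast_Suc_lessThan numeral_2_eq_2)
    also have "(\<Prod>i\<in>{2..<j}. F (i,j)) = 1"
      by (rule prod.neutral) (use that assms(2) in auto)
    finally show ?thesis by simp
  qed
  have "(\<Prod>p\<in>Pr n. F p) = (\<Prod>j<n. \<Prod>i<j. F (i,j))" by (rule prod_Pr)
  also have "\<dots> = (\<Prod>i<0. F (i,0)) * ((\<Prod>i<1. F (i,1)) * (\<Prod>j\<in>{2..<n}. \<Prod>i<j. F (i,j)))"
    using assms(1) by (simp add: lessThan_atLeast0 prod.atLeast_Suc_lessThan numeral_2_eq_2)
  also have "(\<Prod>j\<in>{2..<n}. \<Prod>i<j. F (i,j)) = (\<Prod>j\<in>{2..<n}. F (0,j) * F (1,j))"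
    by (rule prod.cong) (auto simp: inner)
  finally show ?thesis by simp
qed

lemma pairs0:
  assumes "1 \<le> n" "\<And>i j. 1 \<le> i \<Longrightarrow> i < j \<Longrightarrow> j < n \<Longrightarrow> F (i,j) = 1"
  shows "(\<Prod>p\<in>Pr n. F p) = (\<Prod>j\<in>{1..<n}. F (0,j))"
proof -
  have inner: "(\<Prod>i<j. F (i,j)) = F (0,j)" if "1 \<le> j" "j < n" for j
  proof -
    have "(\<Prod>i<j. F (i,j)) = F (0,j) * (\<Prod>i\<in>{1..<j}. F (i,j))"
      using that by (simp add: lessThan_atLeast0 prod.atLeast_Suc_lessThan)
    also have "(\<Prod>i\<in>{1..<j}. F (i,j)) = 1"
      by (rule prod.neutral) (use that assms(2) in auto)
    finally show ?thesis by simp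
  qed
  have "(\<Prod>p\<in>Pr n. F p) = (\<Prod>j<n. \<Prod>i<j. F (i,j))" by (rule prod_Pr)
  also have "\<dots> = (\<Prod>i<0. F (i,0)) * (\<Prod>j\<in>{1..<n}. \<Prod>i<j. F (i,j))"
    using assms(1) by (simp add: lessThan_atLeast0 prod.atLeast_Suc_lessThan)
  also have "(\<Prod>j\<in>{1..<n}. \<Prod>i<j. F (i,j)) = (\<Prod>j\<in>{1..<n}. F (0,j))"
    by (rule prod.cong) (auto simp: inner)
  finally show ?thesis by simp
qed

lemma prod_lt01:
  fixes n :: nat and f :: "nat \<Rightarrow> 'a::comm_monoid_mult"
  assumes "2 \<le> n" "\<And>i. 2 \<le> i \<Longrightarrow> i < n \<Longrightarrow> f i = 1"
  shows "(\<Prod>i<n. f i) = f 0 * f 1"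
proof -
  have "(\<Prod>i<n. f i) = f 0 * (f 1 * (\<Prod>i\<in>{2..<n}. f i))"
    using assms(1) by (simp add: lessThan_atLeast0 prod.atLeast_Suc_lessThan numeral_2_eq_2)
  also have "(\<Prod>i\<in>{2..<n}. f i) = 1" by (rule prod.neutral) (use assms(2) in auto)
  finally show ?thesis by simp
qed

lemma prod_lt0:
  fixes n :: nat and f :: "nat \<Rightarrow> 'a::comm_monoid_mult"
  assumes "1 \<le> n" "\<And>i. 1 \<le> i \<Longrightarrow> i < n \<Longrightarrow> f i = 1"
  shows "(\<Prod>i<n. f i) = f 0"
proof -
  have "(\<Prod>i<n. f i) = f 0 * (\<Prod>i\<in>{1..<n}. f i)"
    using assms(1) by (simp add: lessThan_atLeast0 prod.atLeast_Suc_lessThan)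
  also have "(\<Prod>i\<in>{1..<n}. f i) = 1" by (rule prod.neutral) (use assms(2) in auto)
  finally show ?thesis by simp
qed

lemma pairs_e01:
  fixes \<phi> :: "real \<Rightarrow> real" and c :: "nat \<Rightarrow> real" and r :: real
  assumes n: "3 \<le> n" and c: "c 0 = 1" "c 1 = 1" "\<And>k. 2 \<le> k \<Longrightarrow> c k = 0"
    and N1: "\<And>i j. i < j \<Longrightarrow> j < n \<Longrightarrow> \<phi> (real j - real i) \<noteq> 0"
    and N2: "\<And>i j. i < j \<Longrightarrow> j < n \<Longrightarrow> \<phi> (2 * r - real i - real j) \<noteq> 0"
  shows "(\<Prod>p\<in>Pr n. \<phi> (real (snd p) - real (fst p) + c (fst p) - c (snd p)) / \<phi> (real (snd p) - real (fst p)))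
           = \<phi> (real n) / \<phi> 2 * (\<phi> (real n - 1) / \<phi> 1)" (is ?S1)
    and "(\<Prod>p\<in>Pr n. \<phi> (2 * r - real (fst p) - real (snd p) + c (fst p) + c (snd p)) / \<phi> (2 * r - real (fst p) - real (snd p)))
           = \<phi> (2 * r + 1) / \<phi> (2 * r - 1) * (\<phi> (2 * r - 1) / \<phi> (2 * r + 1 - real n)) * (\<phi> (2 * r - 2) / \<phi> (2 * r - real n))" (is ?S2)
proof -
  have n2: "2 \<le> n" using n by simp
  have c1': "c (Suc 0) = 1" using c(2) by simp
  have "(\<Prod>p\<in>Pr n. \<phi> (real (snd p) - real (fst p) + c (fst p) - c (snd p)) / \<phi> (real (snd p) - real (fst p)))
     = (\<phi> (1 + c 0 - c 1) / \<phi> 1) * (\<Prod>j\<in>{2..<n}. (\<phi> (real j + c 0 - c j) / \<phi> (real j)) * (\<phi> (real j - 1 + c 1 - c j) / \<phi> (real j - 1)))"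
  proof (subst pairs01[OF n2])
    fix i j :: nat assume "2 \<le> i" "i < j" "j < n"
    then show "\<phi> (real (snd (i,j)) - real (fst (i,j)) + c (fst (i,j)) - c (snd (i,j))) / \<phi> (real (snd (i,j)) - real (fst (i,j))) = 1"
      using N1[of i j] c(3)[of i] c(3)[of j] by simp
  qed simp
  also have "\<dots> = (\<Prod>j\<in>{2..<n}. \<phi> (real (Suc j)) / \<phi> (real j) * (\<phi> (real (Suc j) - 1) / \<phi> (real j - 1)))"
  proof -
    have f01: "\<phi> (1 + c 0 - c 1) / \<phi> 1 = 1" using N1[of 0 1] n by (simp add: c(1,2) c1')
    have fj: "(\<phi> (real j + c 0 - c j) / \<phi> (real j)) * (\<phi> (real j - 1 + c 1 - c j) / \<phi> (real j - 1))
        = \<phi> (real (Suc j)) / \<phi> (real j) * (\<phi> (real (Suc j) - 1) / \<phi> (real j - 1))" if "j \<in> {2..<n}" for j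
      using that c(3)[of j] by (simp add: c(1,2) c1' algebra_simps)
    show ?thesis by (simp only: f01 mult_1_left) (rule prod.cong[OF refl fj])
  qed
  also have "\<dots> = (\<Prod>j\<in>{2..<n}. \<phi> (real (Suc j)) / \<phi> (real j)) * (\<Prod>j\<in>{2..<n}. \<phi> (real (Suc j) - 1) / \<phi> (real j - 1))"
    by (rule prod.distrib)
  also have "(\<Prod>j\<in>{2..<n}. \<phi> (real (Suc j)) / \<phi> (real j)) = \<phi> (real n) / \<phi> (real 2)"
    by (rule tele_up'[where g = "\<lambda>j. \<phi> (real j)"]) (use n N1[of 0] in auto)
  also have "(\<Prod>j\<in>{2..<n}. \<phi> (real (Suc j) - 1) / \<phi> (real j - 1)) = \<phi> (real n - 1) / \<phi> (real 2 - 1)"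
  proof (rule tele_up'[where g = "\<lambda>j. \<phi> (real j - 1)"])
    show "\<forall>j. 2 \<le> j \<and> j < n \<longrightarrow> \<phi> (real j - 1) \<noteq> 0"
    proof (intro allI impI)
      fix j assume "2 \<le> j \<and> j < n"
      then show "\<phi> (real j - 1) \<noteq> 0" using N1[of 1 j] by simp
    qed
  qed (use n in auto)
  finally show ?S1 by simp
  have "(\<Prod>p\<in>Pr n. \<phi> (2 * r - real (fst p) - real (snd p) + c (fst p) + c (snd p)) / \<phi> (2 * r - real (fst p) - real (snd p)))
     = (\<phi> (2 * r - 1 + c 0 + c 1) / \<phi> (2 * r - 1)) * (\<Prod>j\<in>{2..<n}. (\<phi> (2 * r - real j + c 0 + c j) / \<phi> (2 * r - real j)) * (\<phi> (2 * r - 1 - real j + c 1 + c j) / \<phi> (2 * r - 1 - real j)))"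
  proof (subst pairs01[OF n2])
    fix i j :: nat assume "2 \<le> i" "i < j" "j < n"
    then show "\<phi> (2 * r - real (fst (i,j)) - real (snd (i,j)) + c (fst (i,j)) + c (snd (i,j))) / \<phi> (2 * r - real (fst (i,j)) - real (snd (i,j))) = 1"
      using N2[of i j] c(3)[of i] c(3)[of j] by simp
  qed simp
  also have "\<dots> = \<phi> (2 * r + 1) / \<phi> (2 * r - 1) * (\<Prod>j\<in>{2..<n}. \<phi> (2 * r + 1 - real j) / \<phi> (2 * r + 1 - real (Suc j)) * (\<phi> (2 * r - real j) / \<phi> (2 * r - real (Suc j))))"
  proof -
    have f01: "\<phi> (2 * r - 1 + c 0 + c 1) / \<phi> (2 * r - 1) = \<phi> (2 * r + 1) / \<phi> (2 * r - 1)" by (simp add: c(1,2) c1' algebra_simps)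
    have fj: "(\<phi> (2 * r - real j + c 0 + c j) / \<phi> (2 * r - real j)) * (\<phi> (2 * r - 1 - real j + c 1 + c j) / \<phi> (2 * r - 1 - real j))
        = \<phi> (2 * r + 1 - real j) / \<phi> (2 * r + 1 - real (Suc j)) * (\<phi> (2 * r - real j) / \<phi> (2 * r - real (Suc j)))" if "j \<in> {2..<n}" for j
      using that c(3)[of j] by (simp add: c(1,2) c1' algebra_simps)
    show ?thesis by (simp only: f01) (rule arg_cong2[where f="(*)", OF refl prod.cong[OF refl fj]])
  qed
  also have "\<dots> = \<phi> (2 * r + 1) / \<phi> (2 * r - 1) * ((\<Prod>j\<in>{2..<n}. \<phi> (2 * r + 1 - real j) / \<phi> (2 * r + 1 - real (Suc j))) * (\<Prod>j\<in>{2..<n}. \<phi> (2 * r - real j) / \<phi> (2 * r - real (Suc j))))"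
    by (simp only: prod.distrib)
  also have "(\<Prod>j\<in>{2..<n}. \<phi> (2 * r + 1 - real j) / \<phi> (2 * r + 1 - real (Suc j))) = \<phi> (2 * r + 1 - real 2) / \<phi> (2 * r + 1 - real n)"
  proof (rule tele_down'[where g = "\<lambda>j. \<phi> (2 * r + 1 - real j)"])
    show "\<forall>j. 2 < j \<and> j \<le> n \<longrightarrow> \<phi> (2 * r + 1 - real j) \<noteq> 0"
    proof (intro allI impI)
      fix j assume j: "2 < j \<and> j \<le> n"
      have "\<phi> (2 * r - real (0::nat) - real (j - 1)) \<noteq> 0" by (rule N2) (use j in auto)
      moreover have "2 * r - real (0::nat) - real (j - 1) = 2 * r + 1 - real j" using j by (simp add: of_nat_diff)
      ultimately show "\<phi> (2 * r + 1 - real j) \<noteq> 0" by metis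
    qed
  qed (use n in auto)
  also have "(\<Prod>j\<in>{2..<n}. \<phi> (2 * r - real j) / \<phi> (2 * r - real (Suc j))) = \<phi> (2 * r - real 2) / \<phi> (2 * r - real n)"
  proof (rule tele_down'[where g = "\<lambda>j. \<phi> (2 * r - real j)"])
    show "\<forall>j. 2 < j \<and> j \<le> n \<longrightarrow> \<phi> (2 * r - real j) \<noteq> 0"
    proof (intro allI impI)
      fix j assume j: "2 < j \<and> j \<le> n"
      have "\<phi> (2 * r - real (1::nat) - real (j - 1)) \<noteq> 0" by (rule N2) (use j in auto)
      moreover have "2 * r - real (1::nat) - real (j - 1) = 2 * r - real j" using j by (simp add: of_nat_diff)
      ultimately show "\<phi> (2 * r - real j) \<noteq> 0" by metis
    qed
  qed (use n in auto)
  finally show ?S2 by (simp add: mult_ac)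
qed

lemma finite_img_Pr: "finite (f ` Pr n)" by (simp add: finite_Pr)

lemma posroots_D: "posroots (D n) = (\<lambda>(i,j). vsub (ev i) (ev j)) ` Pr n \<union> (\<lambda>(i,j). vadd (ev i) (ev j)) ` Pr n"
  by (simp only: posroots.simps img_vsub img_vadd)
lemma posroots_B: "posroots (B n) = (\<lambda>(i,j). vsub (ev i) (ev j)) ` Pr n \<union> (\<lambda>(i,j). vadd (ev i) (ev j)) ` Pr n \<union> ev ` {..<n}"
  by (simp only: posroots.simps img_vsub img_vadd) auto
lemma posroots_C: "posroots (C n) = (\<lambda>(i,j). vsub (ev i) (ev j)) ` Pr n \<union> (\<lambda>(i,j). vadd (ev i) (ev j)) ` Pr n \<union> (\<lambda>i. vscale 2 (ev i)) ` {..<n}"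
  by (simp only: posroots.simps img_vsub img_vadd) auto

lemma disj_sub_W: assumes "\<And>k x. W k x \<ge> 0"
  shows "(\<lambda>(i,j). vsub (ev i) (ev j)) ` Pr n \<inter> W ` S = {}"
proof -
  { fix i j k assume h: "vsub (ev i) (ev j) = W k" "i < j"
    have "vsub (ev i) (ev j) j = W k j" using h by simp
    then have False using h(2) assms[of k j] by (auto simp: vsub_def ev_def split: if_splits) }
  then show ?thesis by (auto simp: Pr_def)
qed

lemma disj_add_ev: "(\<lambda>(i,j). vadd (ev i) (ev j)) ` Pr n \<inter> ev ` S = {}"
proof -
  { fix i j k :: nat assume h: "vadd (ev i) (ev j) = ev k" "i < j"
    have "vadd (ev i) (ev j) i = ev k i" "vadd (ev i) (ev j) j = ev k j" using h by simp_all
    then have False using h(2) by (auto simp: vadd_def ev_def split: if_splits) }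
  then show ?thesis by (auto simp: Pr_def)
qed

lemma disj_add_ev2: "(\<lambda>(i,j). vadd (ev i) (ev j)) ` Pr n \<inter> (\<lambda>i. vscale 2 (ev i)) ` S = {}"
proof -
  { fix i j k :: nat assume h: "vadd (ev i) (ev j) = vscale 2 (ev k)" "i < j"
    have "vadd (ev i) (ev j) i = vscale 2 (ev k) i" using h by simp_all
    then have False using h(2) by (auto simp: vadd_def vscale_def ev_def split: if_splits) }
  then show ?thesis by (auto simp: Pr_def)
qed

lemma inj_ev: "inj_on ev S"
proof (rule inj_onI)
  fix i j assume "ev i = ev j"
  then have "ev i i = ev j i" by simp
  then show "i = j" by (auto simp: ev_def split: if_splits)
qed

lemma inj_ev2: "inj_on (\<lambda>i. vscale 2 (ev i)) S"
proof (rule inj_onI)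
  fix i j assume "vscale 2 (ev i) = vscale 2 (ev j)"
  then have "vscale 2 (ev i) i = vscale 2 (ev j) i" by simp
  then show "i = j" by (auto simp: ev_def vscale_def split: if_splits)
qed

lemma prod_D_split: "(\<Prod>\<mu>\<in>posroots (D n). f \<mu>) = (\<Prod>p\<in>Pr n. f (vsub (ev (fst p)) (ev (snd p)))) * (\<Prod>p\<in>Pr n. f (vadd (ev (fst p)) (ev (snd p))))"
  unfolding posroots_D prod.union_disjoint[OF finite_img_Pr finite_img_Pr disj_sub_add]
  by (simp add: prod.reindex[OF inj_vsub'] prod.reindex[OF inj_vadd'] case_prod_beta)

lemma sum_D_split: "(\<Sum>\<mu>\<in>posroots (D n). f \<mu>) = (\<Sum>p\<in>Pr n. f (vsub (ev (fst p)) (ev (snd p)))) + (\<Sum>p\<in>Pr n. f (vadd (ev (fst p)) (ev (snd p))))"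
  unfolding posroots_D sum.union_disjoint[OF finite_img_Pr finite_img_Pr disj_sub_add]
  by (simp add: sum.reindex[OF inj_vsub'] sum.reindex[OF inj_vadd'] case_prod_beta)

lemma prod_BC_split:
  assumes "inj_on W {..<n}" "\<And>k x. W k x \<ge> 0" "(\<lambda>(i,j). vadd (ev i) (ev j)) ` Pr n \<inter> W ` {..<n} = {}"
  shows "(\<Prod>\<mu>\<in>(\<lambda>(i,j). vsub (ev i) (ev j)) ` Pr n \<union> (\<lambda>(i,j). vadd (ev i) (ev j)) ` Pr n \<union> W ` {..<n}. f \<mu>)
   = (\<Prod>p\<in>Pr n. f (vsub (ev (fst p)) (ev (snd p)))) * (\<Prod>p\<in>Pr n. f (vadd (ev (fst p)) (ev (snd p)))) * (\<Prod>i<n. f (W i))"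
proof -
  have d: "((\<lambda>(i,j). vsub (ev i) (ev j)) ` Pr n \<union> (\<lambda>(i,j). vadd (ev i) (ev j)) ` Pr n) \<inter> W ` {..<n} = {}"
    using disj_sub_W[of W n "{..<n}", OF assms(2)] assms(3) by blast
  show ?thesis
    apply (subst prod.union_disjoint[OF _ _ d], simp_all add: finite_Pr)
    apply (subst prod.union_disjoint, simp_all add: finite_Pr disj_sub_add)
    apply (simp add: prod.reindex[OF inj_vsub'] prod.reindex[OF inj_vadd'] prod.reindex[OF assms(1)] case_prod_beta)
    done
qed

lemma sum_BC_split:
  assumes "inj_on W {..<n}" "\<And>k x. W k x \<ge> 0" "(\<lambda>(i,j). vadd (ev i) (ev j)) ` Pr n \<inter> W ` {..<n} = {}"
  shows "(\<Sum>\<mu>\<in>(\<lambda>(i,j). vsub (ev i) (ev j)) ` Pr n \<union> (\<lambda>(i,j). vadd (ev i) (ev j)) ` Pr n \<union> W ` {..<n}. f \<mu>)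
   = (\<Sum>p\<in>Pr n. f (vsub (ev (fst p)) (ev (snd p)))) + (\<Sum>p\<in>Pr n. f (vadd (ev (fst p)) (ev (snd p)))) + (\<Sum>i<n. f (W i))"
proof -
  have d: "((\<lambda>(i,j). vsub (ev i) (ev j)) ` Pr n \<union> (\<lambda>(i,j). vadd (ev i) (ev j)) ` Pr n) \<inter> W ` {..<n} = {}"
    using disj_sub_W[of W n "{..<n}", OF assms(2)] assms(3) by blast
  show ?thesis
    apply (subst sum.union_disjoint[OF _ _ d], simp_all add: finite_Pr)
    apply (subst sum.union_disjoint, simp_all add: finite_Pr disj_sub_add)
    apply (simp add: sum.reindex[OF inj_vsub'] sum.reindex[OF inj_vadd'] sum.reindex[OF assms(1)] case_prod_beta)
    done
qed

lemma sum_pairs_k: "(\<Sum>p\<in>Pr n. vsub (ev (fst p)) (ev (snd p)) k) + (\<Sum>p\<in>Pr n. vadd (ev (fst p)) (ev (snd p)) k)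
   = 2 * (if k < n then real (n - 1 - k) else 0)"
proof -
  have "(\<Sum>p\<in>Pr n. vsub (ev (fst p)) (ev (snd p)) k) + (\<Sum>p\<in>Pr n. vadd (ev (fst p)) (ev (snd p)) k)
     = (\<Sum>p\<in>Pr n. vsub (ev (fst p)) (ev (snd p)) k + vadd (ev (fst p)) (ev (snd p)) k)"
    by (simp add: sum.distrib)
  also have "\<dots> = (\<Sum>p\<in>Pr n. 2 * (if k = fst p then 1 else 0))"
    by (rule sum.cong) (auto simp: vsub_def vadd_def ev_def)
  also have "\<dots> = 2 * (if k < n then real (n - 1 - k) else 0)"
    by (simp add: sum_distrib_left[symmetric] sum_Pr_fst_ind)
  finally show ?thesis .
qed

lemma ev_nonneg: "ev k x \<ge> 0" by (simp add: ev_def)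
lemma ev2_nonneg: "vscale 2 (ev k) x \<ge> 0" by (simp add: ev_def vscale_def)

lemma rho_D: "k < n \<Longrightarrow> rho (D n) k = real n - 1 - real k"
  unfolding rho_def sum_D_split[where f = "\<lambda>\<mu>. \<mu> k"] sum_pairs_k by (simp add: of_nat_diff)

lemma rho_B: "k < n \<Longrightarrow> rho (B n) k = real n - 1/2 - real k"
proof -
  assume k: "k < n"
  have "(\<Sum>\<mu>\<in>posroots (B n). \<mu> k) = 2 * real (n - 1 - k) + 1"
    unfolding posroots_B sum_BC_split[OF inj_ev ev_nonneg disj_add_ev] sum_pairs_k
    using k by (simp add: ev_def)
  then show ?thesis using k by (simp add: rho_def of_nat_diff)
qed

lemma rho_C: "k < n \<Longrightarrow> rho (C n) k = real n - real k"
proof -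
  assume k: "k < n"
  have "(\<Sum>\<mu>\<in>posroots (C n). \<mu> k) = 2 * real (n - 1 - k) + 2"
    unfolding posroots_C sum_BC_split[OF inj_ev2 ev2_nonneg disj_add_ev2] sum_pairs_k
    using k by (simp add: ev_def vscale_def sum.delta sum.delta' if_distrib[of "\<lambda>x. 2 * x"] cong: if_cong)
  then show ?thesis using k by (simp add: rho_def of_nat_diff)
qed

lemma mf_D:
  assumes "2 \<le> n" "i < n" "j < n"
  shows "minform (D n) (vsub (ev i) (ev j)) x = x i - x j" "minform (D n) (vadd (ev i) (ev j)) x = x i + x j"
proof -
  have "eucl (D n) (max_root (D n)) (max_root (D n)) = 2"
    using assms by (simp only: max_root.simps eucl_vadd eucl_ev amb_dim.simps) (simp add: vadd_def ev_def)
  then show "minform (D n) (vsub (ev i) (ev j)) x = x i - x j" "minform (D n) (vadd (ev i) (ev j)) x = x i + x j"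
    using assms by (simp_all add: minform_def eucl_vsub eucl_vadd eucl_ev)
qed

lemma caseD:
  fixes \<phi> :: "real \<Rightarrow> real"
  assumes n: "4 \<le> n"
   and par: "(\<forall>x. \<phi> (- x) = \<phi> x) \<or> (\<forall>x. \<phi> (- x) = - \<phi> x)"
   and nz: "\<forall>\<mu>\<in>posroots (D n). \<phi> (minform (D n) \<mu> (rho (D n))) \<noteq> 0" "\<phi> (\<alpha>/2) \<noteq> 0" "\<phi> (\<beta>/2) \<noteq> 0" "\<phi> (\<gamma>/2) \<noteq> 0"
   and v: "\<alpha> = -2" "\<beta> = 4" "\<gamma> = 2 * real n - 4" "t = \<alpha> + \<beta> + \<gamma>"
  shows "(\<Prod>\<mu>\<in>posroots (D n). \<phi> (minform (D n) \<mu> (vadd (max_root (D n)) (rho (D n)))) / \<phi> (minform (D n) \<mu> (rho (D n))))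
     = \<phi> ((\<alpha> - 2 * t) / 2) / \<phi> (\<alpha> / 2) * (\<phi> ((\<beta> - 2 * t) / 2) / \<phi> (\<beta> / 2)) * (\<phi> ((\<gamma> - 2 * t) / 2) / \<phi> (\<gamma> / 2))"
proof -
  obtain s where s: "s * s = 1" "\<And>x. \<phi> (- x) = s * \<phi> x" using parity_sign[OF par] by blast
  define c where "c = max_root (D n)"
  define r where "r = real n - 1"
  have c: "c 0 = 1" "c 1 = 1" "\<And>k. 2 \<le> k \<Longrightarrow> c k = 0" by (auto simp: c_def vadd_def ev_def)
  have n2: "2 \<le> n" "3 \<le> n" using n by auto
  have N1: "\<phi> (real j - real i) \<noteq> 0" if "i < j" "j < n" for i j
  proof -
    have "vsub (ev i) (ev j) \<in> posroots (D n)" using that by (simp only: posroots.simps) blast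
    then have "\<phi> (minform (D n) (vsub (ev i) (ev j)) (rho (D n))) \<noteq> 0" using nz(1) by blast
    then show ?thesis using that n2 by (simp add: mf_D rho_D)
  qed
  have N2: "\<phi> (2 * r - real i - real j) \<noteq> 0" if "i < j" "j < n" for i j
  proof -
    have "vadd (ev i) (ev j) \<in> posroots (D n)" using that by (simp only: posroots.simps) blast
    then have "\<phi> (minform (D n) (vadd (ev i) (ev j)) (rho (D n))) \<noteq> 0" using nz(1) by blast
    then show ?thesis using that n2 by (simp add: mf_D rho_D r_def algebra_simps)
  qed
  note S = pairs_e01[where \<phi>=\<phi> and c=c and r=r and n=n, OF n2(2) c N1 N2]
  have "(\<Prod>\<mu>\<in>posroots (D n). \<phi> (minform (D n) \<mu> (vadd (max_root (D n)) (rho (D n)))) / \<phi> (minform (D n) \<mu> (rho (D n))))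
    = (\<Prod>p\<in>Pr n. \<phi> (real (snd p) - real (fst p) + c (fst p) - c (snd p)) / \<phi> (real (snd p) - real (fst p)))
    * (\<Prod>p\<in>Pr n. \<phi> (2 * r - real (fst p) - real (snd p) + c (fst p) + c (snd p)) / \<phi> (2 * r - real (fst p) - real (snd p)))"
    unfolding prod_D_split
  proof (intro arg_cong2[where f = "(*)"] prod.cong refl)
    fix p assume p: "p \<in> Pr n"
    obtain i j where ij: "p = (i,j)" "i < j" "j < n" using p by (auto simp: Pr_def)
    have m1: "minform (D n) (vsub (ev i) (ev j)) x = x i - x j" for x using ij n2 by (simp add: mf_D)
    have m2: "minform (D n) (vadd (ev i) (ev j)) x = x i + x j" for x using ij n2 by (simp add: mf_D)
    show "\<phi> (minform (D n) (vsub (ev (fst p)) (ev (snd p))) (vadd (max_root (D n)) (rho (D n)))) / \<phi> (minform (D n) (vsub (ev (fst p)) (ev (snd p))) (rho (D n)))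
        = \<phi> (real (snd p) - real (fst p) + c (fst p) - c (snd p)) / \<phi> (real (snd p) - real (fst p))"
      unfolding ij(1) fst_conv snd_conv m1 m2 using ij by (simp add: vadd_def rho_D c_def algebra_simps)
    show "\<phi> (minform (D n) (vadd (ev (fst p)) (ev (snd p))) (vadd (max_root (D n)) (rho (D n)))) / \<phi> (minform (D n) (vadd (ev (fst p)) (ev (snd p))) (rho (D n)))
        = \<phi> (2 * r - real (fst p) - real (snd p) + c (fst p) + c (snd p)) / \<phi> (2 * r - real (fst p) - real (snd p))"
      unfolding ij(1) fst_conv snd_conv m1 m2 using ij by (simp add: vadd_def rho_D c_def r_def algebra_simps)
  qed
  also have "\<dots> = \<phi> (real n) / \<phi> 2 * (\<phi> (real n - 1) / \<phi> 1) *
       (\<phi> (2 * real n - 1) / \<phi> (2 * real n - 3) * (\<phi> (2 * real n - 3) / \<phi> (real n - 1)) * (\<phi> (2 * real n - 4) / \<phi> (real n - 2)))"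
  proof -
    have e: "2 * r + 1 - real n = real n - 1" "2 * r + 1 = 2 * real n - 1" "2 * r - 1 = 2 * real n - 3"
      "2 * r - 2 = 2 * real n - 4" "2 * r - real n = real n - 2" by (simp_all add: r_def)
    show ?thesis by (simp only: S(1) S(2) e(1)) (simp only: e)
  qed
  finally have L: "(\<Prod>\<mu>\<in>posroots (D n). \<phi> (minform (D n) \<mu> (vadd (max_root (D n)) (rho (D n)))) / \<phi> (minform (D n) \<mu> (rho (D n))))
    = \<phi> (real n) / \<phi> 2 * (\<phi> (real n - 1) / \<phi> 1) *
       (\<phi> (2 * real n - 1) / \<phi> (2 * real n - 3) * (\<phi> (2 * real n - 3) / \<phi> (real n - 1)) * (\<phi> (2 * real n - 4) / \<phi> (real n - 2)))" .
  have e1: "(\<alpha> - 2 * t) / 2 = - (2 * real n - 1)" using v by (simp add: field_simps)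
  have e2: "\<alpha> / 2 = - 1" using v by simp
  have e3: "(\<beta> - 2 * t) / 2 = - (2 * real n - 4)" using v by (simp add: field_simps)
  have e4: "(\<gamma> - 2 * t) / 2 = - real n" using v by (simp add: field_simps)
  have e5: "\<beta> / 2 = 2" "\<gamma> / 2 = real n - 2" using v by simp_all
  have r1: "\<phi> ((\<alpha> - 2 * t) / 2) = s * \<phi> (2 * real n - 1)" unfolding e1 by (rule s(2))
  have r2: "\<phi> (\<alpha> / 2) = s * \<phi> 1" unfolding e2 by (rule s(2))
  have r3: "\<phi> ((\<beta> - 2 * t) / 2) = s * \<phi> (2 * real n - 4)" unfolding e3 by (rule s(2))
  have r4: "\<phi> ((\<gamma> - 2 * t) / 2) = s * \<phi> (real n)" unfolding e4 by (rule s(2))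
  have z1: "\<phi> 1 \<noteq> 0" using N1[of 0 1] n by simp
  have z2: "\<phi> (real n - 1) \<noteq> 0" using N1[of 0 "n - 1"] n by (simp add: of_nat_diff)
  have z3: "\<phi> (2 * real n - 3) \<noteq> 0" using N2[of 0 1] n by (simp add: r_def algebra_simps)
  have z4: "\<phi> 2 \<noteq> 0" "\<phi> (real n - 2) \<noteq> 0" using nz(3,4) e5 by simp_all
  have s0: "s \<noteq> 0" using s(1) by auto
  show ?thesis unfolding L r1 r2 r3 r4 e5 using z1 z2 z3 z4 s0 s(1)
    by (simp add: field_simps)
qed

lemma mf_B:
  assumes "2 \<le> n" "i < n" "j < n"
  shows "minform (B n) (vsub (ev i) (ev j)) x = x i - x j" "minform (B n) (vadd (ev i) (ev j)) x = x i + x j"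
    "minform (B n) (ev i) x = x i"
proof -
  have "eucl (B n) (max_root (B n)) (max_root (B n)) = 2"
    using assms by (simp only: max_root.simps eucl_vadd eucl_ev amb_dim.simps) (simp add: vadd_def ev_def)
  then show "minform (B n) (vsub (ev i) (ev j)) x = x i - x j" "minform (B n) (vadd (ev i) (ev j)) x = x i + x j"
    "minform (B n) (ev i) x = x i"
    using assms by (simp_all add: minform_def eucl_vsub eucl_vadd eucl_ev)
qed

lemma caseB:
  fixes \<phi> :: "real \<Rightarrow> real"
  assumes n: "3 \<le> n"
   and par: "(\<forall>x. \<phi> (- x) = \<phi> x) \<or> (\<forall>x. \<phi> (- x) = - \<phi> x)"
   and nz: "\<forall>\<mu>\<in>posroots (B n). \<phi> (minform (B n) \<mu> (rho (B n))) \<noteq> 0" "\<phi> (\<alpha>/2) \<noteq> 0" "\<phi> (\<beta>/2) \<noteq> 0" "\<phi> (\<gamma>/2) \<noteq> 0"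
   and v: "\<alpha> = -2" "\<beta> = 4" "\<gamma> = 2 * real n - 3" "t = \<alpha> + \<beta> + \<gamma>"
  shows "(\<Prod>\<mu>\<in>posroots (B n). \<phi> (minform (B n) \<mu> (vadd (max_root (B n)) (rho (B n)))) / \<phi> (minform (B n) \<mu> (rho (B n))))
     = \<phi> ((\<alpha> - 2 * t) / 2) / \<phi> (\<alpha> / 2) * (\<phi> ((\<beta> - 2 * t) / 2) / \<phi> (\<beta> / 2)) * (\<phi> ((\<gamma> - 2 * t) / 2) / \<phi> (\<gamma> / 2))"
proof -
  obtain s where s: "s * s = 1" "\<And>x. \<phi> (- x) = s * \<phi> x" using parity_sign[OF par] by blast
  define c where "c = max_root (B n)"
  define r where "r = real n - 1/2"
  have c: "c 0 = 1" "c 1 = 1" "\<And>k. 2 \<le> k \<Longrightarrow> c k = 0" by (auto simp: c_def vadd_def ev_def)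
  have n2: "2 \<le> n" "3 \<le> n" using n by auto
  have N1: "\<phi> (real j - real i) \<noteq> 0" if "i < j" "j < n" for i j
  proof -
    have "vsub (ev i) (ev j) \<in> posroots (B n)" using that by (simp only: posroots.simps) blast
    then have "\<phi> (minform (B n) (vsub (ev i) (ev j)) (rho (B n))) \<noteq> 0" using nz(1) by blast
    then show ?thesis using that n2 by (simp add: mf_B rho_B)
  qed
  have N2: "\<phi> (2 * r - real i - real j) \<noteq> 0" if "i < j" "j < n" for i j
  proof -
    have "vadd (ev i) (ev j) \<in> posroots (B n)" using that by (simp only: posroots.simps) blast
    then have "\<phi> (minform (B n) (vadd (ev i) (ev j)) (rho (B n))) \<noteq> 0" using nz(1) by blast
    then show ?thesis using that n2 by (simp add: mf_B rho_B r_def algebra_simps)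
  qed
  have N3: "\<phi> (r - real i) \<noteq> 0" if "i < n" for i
  proof -
    have "ev i \<in> posroots (B n)" using that by (simp only: posroots.simps) blast
    then have "\<phi> (minform (B n) (ev i) (rho (B n))) \<noteq> 0" using nz(1) by blast
    then show ?thesis using that n2 by (simp add: mf_B rho_B r_def algebra_simps)
  qed
  note S = pairs_e01[where \<phi>=\<phi> and c=c and r=r and n=n, OF n2(2) c N1 N2]
  have "(\<Prod>\<mu>\<in>posroots (B n). \<phi> (minform (B n) \<mu> (vadd (max_root (B n)) (rho (B n)))) / \<phi> (minform (B n) \<mu> (rho (B n))))
    = (\<Prod>p\<in>Pr n. \<phi> (real (snd p) - real (fst p) + c (fst p) - c (snd p)) / \<phi> (real (snd p) - real (fst p)))
    * (\<Prod>p\<in>Pr n. \<phi> (2 * r - real (fst p) - real (snd p) + c (fst p) + c (snd p)) / \<phi> (2 * r - real (fst p) - real (snd p)))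
    * (\<Prod>i<n. \<phi> (r - real i + c i) / \<phi> (r - real i))"
    unfolding posroots_B prod_BC_split[OF inj_ev ev_nonneg disj_add_ev]
  proof (intro arg_cong2[where f = "(*)"] prod.cong refl)
    fix p assume p: "p \<in> Pr n"
    obtain i j where ij: "p = (i,j)" "i < j" "j < n" using p by (auto simp: Pr_def)
    have m1: "minform (B n) (vsub (ev i) (ev j)) x = x i - x j" for x using ij n2 by (simp add: mf_B)
    have m2: "minform (B n) (vadd (ev i) (ev j)) x = x i + x j" for x using ij n2 by (simp add: mf_B)
    show "\<phi> (minform (B n) (vsub (ev (fst p)) (ev (snd p))) (vadd (max_root (B n)) (rho (B n)))) / \<phi> (minform (B n) (vsub (ev (fst p)) (ev (snd p))) (rho (B n)))
        = \<phi> (real (snd p) - real (fst p) + c (fst p) - c (snd p)) / \<phi> (real (snd p) - real (fst p))"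
      unfolding ij(1) fst_conv snd_conv m1 m2 using ij by (simp add: vadd_def rho_B c_def algebra_simps)
    show "\<phi> (minform (B n) (vadd (ev (fst p)) (ev (snd p))) (vadd (max_root (B n)) (rho (B n)))) / \<phi> (minform (B n) (vadd (ev (fst p)) (ev (snd p))) (rho (B n)))
        = \<phi> (2 * r - real (fst p) - real (snd p) + c (fst p) + c (snd p)) / \<phi> (2 * r - real (fst p) - real (snd p))"
      unfolding ij(1) fst_conv snd_conv m1 m2 using ij by (simp add: vadd_def rho_B c_def r_def algebra_simps)
  next
    fix i assume i: "i \<in> {..<n}"
    have m3: "minform (B n) (ev i) x = x i" for x using i n2 by (simp add: mf_B)
    show "\<phi> (minform (B n) (ev i) (vadd (max_root (B n)) (rho (B n)))) / \<phi> (minform (B n) (ev i) (rho (B n)))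
        = \<phi> (r - real i + c i) / \<phi> (r - real i)"
      unfolding m3 using i by (simp add: vadd_def rho_B c_def r_def algebra_simps)
  qed
  also have "(\<Prod>i<n. \<phi> (r - real i + c i) / \<phi> (r - real i)) = \<phi> (r + 1) / \<phi> r * (\<phi> r / \<phi> (r - 1))"
  proof -
    have "(\<Prod>i<n. \<phi> (r - real i + c i) / \<phi> (r - real i)) = \<phi> (r - real 0 + c 0) / \<phi> (r - real 0) * (\<phi> (r - real 1 + c 1) / \<phi> (r - real 1))"
    proof (rule prod_lt01)
      fix i assume "2 \<le> i" "i < n"
      then show "\<phi> (r - real i + c i) / \<phi> (r - real i) = 1" using N3[of i] c(3)[of i] by simp
    qed (use n in auto)
    moreover have "c (Suc 0) = 1" using c(2) by simp
    moreover have "\<phi> r \<noteq> 0" using N3[of 0] n by simp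
    ultimately show ?thesis by (simp add: c add.commute)
  qed
  also have "\<dots> = \<phi> (real n + 1/2) / \<phi> (real n - 1/2) * (\<phi> (real n - 1/2) / \<phi> (real n - 3/2))"
    by (simp add: r_def algebra_simps)
  also have "(\<Prod>p\<in>Pr n. \<phi> (real (snd p) - real (fst p) + c (fst p) - c (snd p)) / \<phi> (real (snd p) - real (fst p)))
    * (\<Prod>p\<in>Pr n. \<phi> (2 * r - real (fst p) - real (snd p) + c (fst p) + c (snd p)) / \<phi> (2 * r - real (fst p) - real (snd p)))
    = \<phi> (real n) / \<phi> 2 * (\<phi> (real n - 1) / \<phi> 1) *
       (\<phi> (2 * real n) / \<phi> (2 * real n - 2) * (\<phi> (2 * real n - 2) / \<phi> (real n)) * (\<phi> (2 * real n - 3) / \<phi> (real n - 1)))"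
  proof -
    have e: "2 * r + 1 - real n = real n" "2 * r + 1 = 2 * real n" "2 * r - 1 = 2 * real n - 2"
      "2 * r - 2 = 2 * real n - 3" "2 * r - real n = real n - 1" by (simp_all add: r_def algebra_simps)
    show ?thesis by (simp only: S(1) S(2) e(1)) (simp only: e)
  qed
  finally have L: "(\<Prod>\<mu>\<in>posroots (B n). \<phi> (minform (B n) \<mu> (vadd (max_root (B n)) (rho (B n)))) / \<phi> (minform (B n) \<mu> (rho (B n))))
    = \<phi> (real n) / \<phi> 2 * (\<phi> (real n - 1) / \<phi> 1) *
       (\<phi> (2 * real n) / \<phi> (2 * real n - 2) * (\<phi> (2 * real n - 2) / \<phi> (real n)) * (\<phi> (2 * real n - 3) / \<phi> (real n - 1)))
     * (\<phi> (real n + 1/2) / \<phi> (real n - 1/2) * (\<phi> (real n - 1/2) / \<phi> (real n - 3/2)))" .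
  have e1: "(\<alpha> - 2 * t) / 2 = - (2 * real n)" using v by (simp add: field_simps)
  have e2: "\<alpha> / 2 = - 1" using v by simp
  have e3: "(\<beta> - 2 * t) / 2 = - (2 * real n - 3)" using v by (simp add: field_simps)
  have e4: "(\<gamma> - 2 * t) / 2 = - (real n + 1/2)" using v by (simp add: field_simps)
  have e5: "\<beta> / 2 = 2" "\<gamma> / 2 = real n - 3/2" using v by simp_all
  have r1: "\<phi> ((\<alpha> - 2 * t) / 2) = s * \<phi> (2 * real n)" unfolding e1 by (rule s(2))
  have r2: "\<phi> (\<alpha> / 2) = s * \<phi> 1" unfolding e2 by (rule s(2))
  have r3: "\<phi> ((\<beta> - 2 * t) / 2) = s * \<phi> (2 * real n - 3)" unfolding e3 by (rule s(2))
  have r4: "\<phi> ((\<gamma> - 2 * t) / 2) = s * \<phi> (real n + 1/2)" unfolding e4 by (rule s(2))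
  have z1: "\<phi> 1 \<noteq> 0" using N1[of 0 1] n by simp
  have z2: "\<phi> (real n - 1) \<noteq> 0" using N1[of 0 "n - 1"] n by (simp add: of_nat_diff)
  have z3: "\<phi> (2 * real n - 2) \<noteq> 0" using N2[of 0 1] n by (simp add: r_def algebra_simps)
  have z5: "\<phi> (real n) \<noteq> 0" using N2[of 0 "n - 1"] n by (simp add: r_def algebra_simps of_nat_diff)
  have z6: "\<phi> (real n - 1/2) \<noteq> 0" using N3[of 0] n by (simp add: r_def)
  have z4: "\<phi> 2 \<noteq> 0" "\<phi> (real n - 3/2) \<noteq> 0" using nz(3,4) e5 by simp_all
  have s0: "s \<noteq> 0" using s(1) by auto
  show ?thesis unfolding L r1 r2 r3 r4 e5 using z1 z2 z3 z4 z5 z6 s0 s(1)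
    by (simp add: field_simps)
qed

lemma mf_C:
  assumes "i < n" "j < n"
  shows "minform (C n) (vsub (ev i) (ev j)) x = (x i - x j) / 2" "minform (C n) (vadd (ev i) (ev j)) x = (x i + x j) / 2"
    "minform (C n) (vscale 2 (ev i)) x = x i"
proof -
  have "eucl (C n) (max_root (C n)) (max_root (C n)) = 4"
    using assms by (simp only: max_root.simps eucl_vscale eucl_ev amb_dim.simps) (simp add: vscale_def ev_def)
  then show "minform (C n) (vsub (ev i) (ev j)) x = (x i - x j) / 2" "minform (C n) (vadd (ev i) (ev j)) x = (x i + x j) / 2"
    "minform (C n) (vscale 2 (ev i)) x = x i"
    using assms by (simp_all add: minform_def eucl_vsub eucl_vadd eucl_ev eucl_vscale)
qed

lemma caseC:
  fixes \<phi> :: "real \<Rightarrow> real"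
  assumes n: "3 \<le> n"
   and par: "(\<forall>x. \<phi> (- x) = \<phi> x) \<or> (\<forall>x. \<phi> (- x) = - \<phi> x)"
   and nz: "\<forall>\<mu>\<in>posroots (C n). \<phi> (minform (C n) \<mu> (rho (C n))) \<noteq> 0" "\<phi> (\<alpha>/2) \<noteq> 0" "\<phi> (\<beta>/2) \<noteq> 0" "\<phi> (\<gamma>/2) \<noteq> 0"
   and v: "\<alpha> = -2" "\<beta> = 1" "\<gamma> = real n + 2" "t = \<alpha> + \<beta> + \<gamma>"
  shows "(\<Prod>\<mu>\<in>posroots (C n). \<phi> (minform (C n) \<mu> (vadd (max_root (C n)) (rho (C n)))) / \<phi> (minform (C n) \<mu> (rho (C n))))
     = \<phi> ((\<alpha> - 2 * t) / 2) / \<phi> (\<alpha> / 2) * (\<phi> ((\<beta> - 2 * t) / 2) / \<phi> (\<beta> / 2)) * (\<phi> ((\<gamma> - 2 * t) / 2) / \<phi> (\<gamma> / 2))"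
proof -
  obtain s where s: "s * s = 1" "\<And>x. \<phi> (- x) = s * \<phi> x" using parity_sign[OF par] by blast
  define c where "c = max_root (C n)"
  have c: "c 0 = 2" "\<And>k. 1 \<le> k \<Longrightarrow> c k = 0" by (auto simp: c_def vscale_def ev_def)
  have NV1: "\<phi> ((real j - real i) / 2) \<noteq> 0" if "i < j" "j < n" for i j
  proof -
    have "vsub (ev i) (ev j) \<in> posroots (C n)" using that by (simp only: posroots.simps) blast
    then have "\<phi> (minform (C n) (vsub (ev i) (ev j)) (rho (C n))) \<noteq> 0" using nz(1) by blast
    then show ?thesis using that by (simp add: mf_C rho_C)
  qed
  have NV2: "\<phi> ((2 * real n - real i - real j) / 2) \<noteq> 0" if "i < j" "j < n" for i j
  proof -
    have "vadd (ev i) (ev j) \<in> posroots (C n)" using that by (simp only: posroots.simps) blast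
    then have "\<phi> (minform (C n) (vadd (ev i) (ev j)) (rho (C n))) \<noteq> 0" using nz(1) by blast
    then show ?thesis using that by (simp add: mf_C rho_C algebra_simps)
  qed
  have NV3: "\<phi> (real n - real i) \<noteq> 0" if "i < n" for i
  proof -
    have "vscale 2 (ev i) \<in> posroots (C n)" using that by (simp only: posroots.simps) blast
    then have "\<phi> (minform (C n) (vscale 2 (ev i)) (rho (C n))) \<noteq> 0" using nz(1) by blast
    then show ?thesis using that by (simp add: mf_C rho_C)
  qed
  have NZ: "\<phi> (real k / 2) \<noteq> 0" if "1 \<le> k" "k \<le> 2 * n" for k
  proof -
    have dis: "k < n \<or> k = n \<or> (n < k \<and> k < 2 * n) \<or> k = 2 * n" using that by linarith
    consider "k < n" | "k = n" | "n < k" "k < 2 * n" | "k = 2 * n" using dis by blast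
    then show ?thesis
    proof cases
      case 1 then show ?thesis using NV1[of 0 k] that by simp
    next
      case 2
      have "\<phi> ((2 * real n - real (1::nat) - real (n - 1)) / 2) \<noteq> 0" by (rule NV2) (use n in auto)
      moreover have "(2 * real n - real (1::nat) - real (n - 1)) / 2 = real k / 2" using 2 n by (simp add: of_nat_diff)
      ultimately show ?thesis by metis
    next
      case 3
      have "\<phi> ((2 * real n - real (0::nat) - real (2 * n - k)) / 2) \<noteq> 0" by (rule NV2) (use 3 that in auto)
      moreover have "(2 * real n - real (0::nat) - real (2 * n - k)) / 2 = real k / 2" using 3 by (simp add: of_nat_diff)
      ultimately show ?thesis by metis
    next
      case 4
      have "\<phi> (real n - real (0::nat)) \<noteq> 0" by (rule NV3) (use n in auto)
      then show ?thesis using 4 by simp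
    qed
  qed
  have "(\<Prod>\<mu>\<in>posroots (C n). \<phi> (minform (C n) \<mu> (vadd (max_root (C n)) (rho (C n)))) / \<phi> (minform (C n) \<mu> (rho (C n))))
    = (\<Prod>p\<in>Pr n. \<phi> ((real (snd p) - real (fst p) + c (fst p) - c (snd p)) / 2) / \<phi> ((real (snd p) - real (fst p)) / 2))
    * (\<Prod>p\<in>Pr n. \<phi> ((2 * real n - real (fst p) - real (snd p) + c (fst p) + c (snd p)) / 2) / \<phi> ((2 * real n - real (fst p) - real (snd p)) / 2))
    * (\<Prod>i<n. \<phi> (real n - real i + c i) / \<phi> (real n - real i))"
    unfolding posroots_C prod_BC_split[OF inj_ev2 ev2_nonneg disj_add_ev2]
  proof (intro arg_cong2[where f = "(*)"] prod.cong refl)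
    fix p assume p: "p \<in> Pr n"
    obtain i j where ij: "p = (i,j)" "i < j" "j < n" using p by (auto simp: Pr_def)
    have m1: "minform (C n) (vsub (ev i) (ev j)) x = (x i - x j) / 2" for x using ij by (simp add: mf_C)
    have m2: "minform (C n) (vadd (ev i) (ev j)) x = (x i + x j) / 2" for x using ij by (simp add: mf_C)
    show "\<phi> (minform (C n) (vsub (ev (fst p)) (ev (snd p))) (vadd (max_root (C n)) (rho (C n)))) / \<phi> (minform (C n) (vsub (ev (fst p)) (ev (snd p))) (rho (C n)))
        = \<phi> ((real (snd p) - real (fst p) + c (fst p) - c (snd p)) / 2) / \<phi> ((real (snd p) - real (fst p)) / 2)"
      unfolding ij(1) fst_conv snd_conv m1 m2 using ij by (simp add: vadd_def rho_C c_def algebra_simps)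
    show "\<phi> (minform (C n) (vadd (ev (fst p)) (ev (snd p))) (vadd (max_root (C n)) (rho (C n)))) / \<phi> (minform (C n) (vadd (ev (fst p)) (ev (snd p))) (rho (C n)))
        = \<phi> ((2 * real n - real (fst p) - real (snd p) + c (fst p) + c (snd p)) / 2) / \<phi> ((2 * real n - real (fst p) - real (snd p)) / 2)"
      unfolding ij(1) fst_conv snd_conv m1 m2 using ij by (simp add: vadd_def rho_C c_def algebra_simps)
  next
    fix i assume i: "i \<in> {..<n}"
    have m3: "minform (C n) (vscale 2 (ev i)) x = x i" for x using i by (simp add: mf_C)
    show "\<phi> (minform (C n) (vscale 2 (ev i)) (vadd (max_root (C n)) (rho (C n)))) / \<phi> (minform (C n) (vscale 2 (ev i)) (rho (C n)))
        = \<phi> (real n - real i + c i) / \<phi> (real n - real i)"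
      unfolding m3 using i by (simp add: vadd_def rho_C c_def algebra_simps)
  qed
  also have "(\<Prod>p\<in>Pr n. \<phi> ((real (snd p) - real (fst p) + c (fst p) - c (snd p)) / 2) / \<phi> ((real (snd p) - real (fst p)) / 2))
     = \<phi> ((real n + 1) / 2) / \<phi> 1 * (\<phi> (real n / 2) / \<phi> (1 / 2))"
  proof -
    have "(\<Prod>p\<in>Pr n. \<phi> ((real (snd p) - real (fst p) + c (fst p) - c (snd p)) / 2) / \<phi> ((real (snd p) - real (fst p)) / 2))
      = (\<Prod>j\<in>{1..<n}. \<phi> ((real j - real (0::nat) + c 0 - c j) / 2) / \<phi> ((real j - real (0::nat)) / 2))"
    proof (subst pairs0)
      fix i j :: nat assume "1 \<le> i" "i < j" "j < n"
      then show "\<phi> ((real (snd (i,j)) - real (fst (i,j)) + c (fst (i,j)) - c (snd (i,j))) / 2) / \<phi> ((real (snd (i,j)) - real (fst (i,j))) / 2) = 1"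
        using NV1[of i j] c(2)[of i] c(2)[of j] by simp
    qed (use n in auto)
    also have "\<dots> = (\<Prod>j\<in>{1..<n}. \<phi> ((real (Suc j) + 1) / 2) / \<phi> ((real j + 1) / 2) * (\<phi> (real (Suc j) / 2) / \<phi> (real j / 2)))"
    proof (rule prod.cong[OF refl])
      fix j assume j: "j \<in> {1..<n}"
      have "\<phi> ((real (j + 1)) / 2) \<noteq> 0" by (rule NZ) (use j in auto)
      then show "\<phi> ((real j - real (0::nat) + c 0 - c j) / 2) / \<phi> ((real j - real (0::nat)) / 2) = \<phi> ((real (Suc j) + 1) / 2) / \<phi> ((real j + 1) / 2) * (\<phi> (real (Suc j) / 2) / \<phi> (real j / 2))"
        using j c(1) c(2)[of j] by (simp add: algebra_simps)
    qed
    also have "\<dots> = (\<Prod>j\<in>{1..<n}. \<phi> ((real (Suc j) + 1) / 2) / \<phi> ((real j + 1) / 2)) * (\<Prod>j\<in>{1..<n}. \<phi> (real (Suc j) / 2) / \<phi> (real j / 2))"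
      by (rule prod.distrib)
    also have "(\<Prod>j\<in>{1..<n}. \<phi> ((real (Suc j) + 1) / 2) / \<phi> ((real j + 1) / 2)) = \<phi> ((real n + 1) / 2) / \<phi> ((real 1 + 1) / 2)"
    proof (rule tele_up'[where g = "\<lambda>j. \<phi> ((real j + 1) / 2)"])
      show "\<forall>j. 1 \<le> j \<and> j < n \<longrightarrow> \<phi> ((real j + 1) / 2) \<noteq> 0"
      proof (intro allI impI)
        fix j assume j: "1 \<le> j \<and> j < n"
        have "\<phi> (real (j + 1) / 2) \<noteq> 0" by (rule NZ) (use j in auto)
        then show "\<phi> ((real j + 1) / 2) \<noteq> 0" by (simp add: add.commute)
      qed
    qed (use n in auto)
    also have "(\<Prod>j\<in>{1..<n}. \<phi> (real (Suc j) / 2) / \<phi> (real j / 2)) = \<phi> (real n / 2) / \<phi> (real 1 / 2)"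
      by (rule tele_up'[where g = "\<lambda>j. \<phi> (real j / 2)"]) (use n NZ in auto)
    finally show ?thesis by simp
  qed
  also have "(\<Prod>p\<in>Pr n. \<phi> ((2 * real n - real (fst p) - real (snd p) + c (fst p) + c (snd p)) / 2) / \<phi> ((2 * real n - real (fst p) - real (snd p)) / 2))
     = \<phi> ((2 * real n + 1) / 2) / \<phi> ((real n + 2) / 2) * (\<phi> (real n) / \<phi> ((real n + 1) / 2))"
  proof -
    have "(\<Prod>p\<in>Pr n. \<phi> ((2 * real n - real (fst p) - real (snd p) + c (fst p) + c (snd p)) / 2) / \<phi> ((2 * real n - real (fst p) - real (snd p)) / 2))
      = (\<Prod>j\<in>{1..<n}. \<phi> ((2 * real n - real (0::nat) - real j + c 0 + c j) / 2) / \<phi> ((2 * real n - real (0::nat) - real j) / 2))"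
    proof (subst pairs0)
      fix i j :: nat assume "1 \<le> i" "i < j" "j < n"
      then show "\<phi> ((2 * real n - real (fst (i,j)) - real (snd (i,j)) + c (fst (i,j)) + c (snd (i,j))) / 2) / \<phi> ((2 * real n - real (fst (i,j)) - real (snd (i,j))) / 2) = 1"
        using NV2[of i j] c(2)[of i] c(2)[of j] by simp
    qed (use n in auto)
    also have "\<dots> = (\<Prod>j\<in>{1..<n}. \<phi> ((2 * real n + 2 - real j) / 2) / \<phi> ((2 * real n + 2 - real (Suc j)) / 2) * (\<phi> ((2 * real n + 1 - real j) / 2) / \<phi> ((2 * real n + 1 - real (Suc j)) / 2)))"
    proof (rule prod.cong[OF refl])
      fix j assume j: "j \<in> {1..<n}"
      have "\<phi> (real (2 * n + 1 - j) / 2) \<noteq> 0" by (rule NZ) (use j in auto)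
      moreover have "real (2 * n + 1 - j) = 2 * real n + 1 - real j" using j by (simp add: of_nat_diff)
      ultimately have "\<phi> ((2 * real n + 1 - real j) / 2) \<noteq> 0" by metis
      then show "\<phi> ((2 * real n - real (0::nat) - real j + c 0 + c j) / 2) / \<phi> ((2 * real n - real (0::nat) - real j) / 2) = \<phi> ((2 * real n + 2 - real j) / 2) / \<phi> ((2 * real n + 2 - real (Suc j)) / 2) * (\<phi> ((2 * real n + 1 - real j) / 2) / \<phi> ((2 * real n + 1 - real (Suc j)) / 2))"
        using j c(1) c(2)[of j] by (simp add: algebra_simps)
    qed
    also have "\<dots> = (\<Prod>j\<in>{1..<n}. \<phi> ((2 * real n + 2 - real j) / 2) / \<phi> ((2 * real n + 2 - real (Suc j)) / 2)) * (\<Prod>j\<in>{1..<n}. \<phi> ((2 * real n + 1 - real j) / 2) / \<phi> ((2 * real n + 1 - real (Suc j)) / 2))"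
      by (rule prod.distrib)
    also have "(\<Prod>j\<in>{1..<n}. \<phi> ((2 * real n + 2 - real j) / 2) / \<phi> ((2 * real n + 2 - real (Suc j)) / 2)) = \<phi> ((2 * real n + 2 - real (1::nat)) / 2) / \<phi> ((2 * real n + 2 - real n) / 2)"
    proof (rule tele_down'[where g = "\<lambda>j. \<phi> ((2 * real n + 2 - real j) / 2)"])
      show "\<forall>j. 1 < j \<and> j \<le> n \<longrightarrow> \<phi> ((2 * real n + 2 - real j) / 2) \<noteq> 0"
      proof (intro allI impI)
        fix j assume j: "1 < j \<and> j \<le> n"
        have "\<phi> (real (2 * n + 2 - j) / 2) \<noteq> 0" by (rule NZ) (use j in auto)
        moreover have "real (2 * n + 2 - j) = 2 * real n + 2 - real j" using j by (simp add: of_nat_diff)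
        ultimately show "\<phi> ((2 * real n + 2 - real j) / 2) \<noteq> 0" by metis
      qed
    qed (use n in auto)
    also have "(\<Prod>j\<in>{1..<n}. \<phi> ((2 * real n + 1 - real j) / 2) / \<phi> ((2 * real n + 1 - real (Suc j)) / 2)) = \<phi> ((2 * real n + 1 - real (1::nat)) / 2) / \<phi> ((2 * real n + 1 - real n) / 2)"
    proof (rule tele_down'[where g = "\<lambda>j. \<phi> ((2 * real n + 1 - real j) / 2)"])
      show "\<forall>j. 1 < j \<and> j \<le> n \<longrightarrow> \<phi> ((2 * real n + 1 - real j) / 2) \<noteq> 0"
      proof (intro allI impI)
        fix j assume j: "1 < j \<and> j \<le> n"
        have "\<phi> (real (2 * n + 1 - j) / 2) \<noteq> 0" by (rule NZ) (use j in auto)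
        moreover have "real (2 * n + 1 - j) = 2 * real n + 1 - real j" using j by (simp add: of_nat_diff)
        ultimately show "\<phi> ((2 * real n + 1 - real j) / 2) \<noteq> 0" by metis
      qed
    qed (use n in auto)
    also have "(2 * real n + 2 - real (1::nat)) / 2 = (2 * real n + 1) / 2" by simp
    also have "(2 * real n + 2 - real n) / 2 = (real n + 2) / 2" by simp
    also have "(2 * real n + 1 - real (1::nat)) / 2 = real n" by simp
    also have "(2 * real n + 1 - real n) / 2 = (real n + 1) / 2" by simp
    finally show ?thesis .
  qed
  also have "(\<Prod>i<n. \<phi> (real n - real i + c i) / \<phi> (real n - real i)) = \<phi> (real n + 2) / \<phi> (real n)"
  proof -
    have "(\<Prod>i<n. \<phi> (real n - real i + c i) / \<phi> (real n - real i)) = \<phi> (real n - real 0 + c 0) / \<phi> (real n - real 0)"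
    proof (rule prod_lt0)
      fix i assume "1 \<le> i" "i < n"
      then show "\<phi> (real n - real i + c i) / \<phi> (real n - real i) = 1" using NV3[of i] c(2)[of i] by simp
    qed (use n in auto)
    then show ?thesis by (simp add: c)
  qed
  finally have L: "(\<Prod>\<mu>\<in>posroots (C n). \<phi> (minform (C n) \<mu> (vadd (max_root (C n)) (rho (C n)))) / \<phi> (minform (C n) \<mu> (rho (C n))))
    = \<phi> ((real n + 1) / 2) / \<phi> 1 * (\<phi> (real n / 2) / \<phi> (1 / 2)) *
      (\<phi> ((2 * real n + 1) / 2) / \<phi> ((real n + 2) / 2) * (\<phi> (real n) / \<phi> ((real n + 1) / 2))) *
      (\<phi> (real n + 2) / \<phi> (real n))" .
  have e1: "(\<alpha> - 2 * t) / 2 = - (real n + 2)" using v by (simp add: field_simps)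
  have e2: "\<alpha> / 2 = - 1" using v by simp
  have e3: "(\<beta> - 2 * t) / 2 = - ((2 * real n + 1) / 2)" using v by (simp add: field_simps)
  have e4: "(\<gamma> - 2 * t) / 2 = - (real n / 2)" using v by (simp add: field_simps)
  have e5: "\<beta> / 2 = 1 / 2" "\<gamma> / 2 = (real n + 2) / 2" using v by simp_all
  have r1: "\<phi> ((\<alpha> - 2 * t) / 2) = s * \<phi> (real n + 2)" unfolding e1 by (rule s(2))
  have r2: "\<phi> (\<alpha> / 2) = s * \<phi> 1" unfolding e2 by (rule s(2))
  have r3: "\<phi> ((\<beta> - 2 * t) / 2) = s * \<phi> ((2 * real n + 1) / 2)" unfolding e3 by (rule s(2))
  have r4: "\<phi> ((\<gamma> - 2 * t) / 2) = s * \<phi> (real n / 2)" unfolding e4 by (rule s(2))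
  have z1: "\<phi> 1 \<noteq> 0" using NZ[of 2] n by simp
  have z2: "\<phi> ((real n + 1) / 2) \<noteq> 0" using NZ[of "n + 1"] n by (simp add: add.commute)
  have z3: "\<phi> (real n) \<noteq> 0" using NV3[of 0] n by simp
  have z4: "\<phi> (1 / 2) \<noteq> 0" "\<phi> ((real n + 2) / 2) \<noteq> 0" using nz(3,4) e5 by simp_all
  have s0: "s \<noteq> 0" using s(1) by auto
  show ?thesis unfolding L r1 r2 r3 r4 e5 using z1 z2 z3 z4 s0 s(1)
    by (simp add: field_simps)
qed


definition LB2 :: "vec list" where
  "LB2 = [vsub (ev 0) (ev 1), vadd (ev 0) (ev 1), ev 0, ev 1]"

lemma setLB2: "posroots (B 2) = set LB2"
proof -
  have p: "Pr 2 = {(0,1)}" by (auto simp: Pr_def)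
  have l: "{..<2::nat} = {0,1}" by auto
  show ?thesis unfolding posroots_B p l LB2_def by auto
qed

lemma distLB2: "distinct LB2"
proof -
  have "distinct (map (\<lambda>\<mu>. map \<mu> [0..<2]) LB2)"
    by (simp add: LB2_def ev_def vsub_def vadd_def upt_rec)
  then show ?thesis by (simp add: distinct_map)
qed

lemma rhoB2': "rho (B 2) 0 = 3/2" "rho (B 2) 1 = 1/2" "rho (B 2) (Suc 0) = 1/2"
  by (simp_all add: rho_B)

lemma euclB2: "eucl (B 2) x y = x 0 * y 0 + x 1 * y 1"
  by (simp add: eucl_def eval_nat_numeral lessThan_Suc)

lemma numB2: "map (\<lambda>\<mu>. minform (B 2) \<mu> (vadd (max_root (B 2)) (rho (B 2)))) LB2 = [1, 4, 5/2, 3/2]"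
  by (simp add: minform_def euclB2 rhoB2' LB2_def ev_def vsub_def vadd_def)

lemma denB2: "map (\<lambda>\<mu>. minform (B 2) \<mu> (rho (B 2))) LB2 = [1, 2, 3/2, 1/2]"
  by (simp add: minform_def euclB2 rhoB2' LB2_def ev_def vsub_def vadd_def)

lemma caseB2:
  fixes \<phi> :: "real \<Rightarrow> real"
  assumes par: "(\<forall>x. \<phi> (- x) = \<phi> x) \<or> (\<forall>x. \<phi> (- x) = - \<phi> x)"
   and nz: "\<forall>\<mu>\<in>posroots (B 2). \<phi> (minform (B 2) \<mu> (rho (B 2))) \<noteq> 0" "\<phi> a1 \<noteq> 0" "\<phi> a2 \<noteq> 0" "\<phi> a3 \<noteq> 0"
   and v: "a1 = -1" "a2 = 2" "a3 = 1/2" "n1 = -4" "n2 = -1" "n3 = -5/2"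
  shows "(\<Prod>\<mu>\<in>posroots (B 2). \<phi> (minform (B 2) \<mu> (vadd (max_root (B 2)) (rho (B 2)))) / \<phi> (minform (B 2) \<mu> (rho (B 2))))
     = \<phi> n1 / \<phi> a1 * (\<phi> n2 / \<phi> a2) * (\<phi> n3 / \<phi> a3)"
  apply (rule concrete_case[OF setLB2 distLB2 par nz])
  apply (simp_all only: numB2 denB2 v)
  apply (simp_all add: add_mset_commute)
  done

theorem lemma1:
  fixes T :: lie_type and \<phi> :: "real \<Rightarrow> real"
    and \<alpha> \<beta> \<gamma> t :: real
  assumes "valid_type T"
    and "vogel T = (\<alpha>, \<beta>, \<gamma>)"
    and "t = \<alpha> + \<beta> + \<gamma>"
    and "(\<forall>x. \<phi> (- x) = \<phi> x) \<or> (\<forall>x. \<phi> (- x) = - \<phi> x)"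
    and "\<forall>\<mu>\<in>posroots T. \<phi> (minform T \<mu> (rho T)) \<noteq> 0"
    and "\<phi> (\<alpha> / 2) \<noteq> 0" and "\<phi> (\<beta> / 2) \<noteq> 0" and "\<phi> (\<gamma> / 2) \<noteq> 0"
  shows "(\<Prod>\<mu>\<in>posroots T. \<phi> (minform T \<mu> (vadd (max_root T) (rho T)))
                            / \<phi> (minform T \<mu> (rho T)))
         = \<phi> ((\<alpha> - 2 * t) / 2) / \<phi> (\<alpha> / 2)
           * (\<phi> ((\<beta> - 2 * t) / 2) / \<phi> (\<beta> / 2))
           * (\<phi> ((\<gamma> - 2 * t) / 2) / \<phi> (\<gamma> / 2))"
proof (cases T)
  case (A n)
  have n: "1 \<le> n" using assms(1) A by simp
  have v: "\<alpha> = -2" "\<beta> = 2" "\<gamma> = real n + 1" using assms(2) A by auto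
  show ?thesis unfolding A
    by (rule caseA[OF n assms(4) _ assms(6,7,8) v assms(3)]) (use assms(5) A in simp)
next
  case (B n)
  have n: "2 \<le> n" using assms(1) B by simp
  have v: "\<alpha> = -2" "\<beta> = 4" "\<gamma> = 2 * real n - 3" using assms(2) B by auto
  show ?thesis
  proof (cases "n = 2")
    case True
    show ?thesis unfolding B True
      by (rule caseB2[OF assms(4) _ assms(6,7,8)]) (use assms(5) B True v assms(3) in simp_all)
  next
    case False
    then have n3: "3 \<le> n" using n by simp
    show ?thesis unfolding B
      by (rule caseB[OF n3 assms(4) _ assms(6,7,8) v assms(3)]) (use assms(5) B in simp)
  qed
next
  case (C n)
  have n: "3 \<le> n" using assms(1) C by simp
  have v: "\<alpha> = -2" "\<beta> = 1" "\<gamma> = real n + 2" using assms(2) C by auto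
  show ?thesis unfolding C
    by (rule caseC[OF n assms(4) _ assms(6,7,8) v assms(3)]) (use assms(5) C in simp)
next
  case (D n)
  have n: "4 \<le> n" using assms(1) D by simp
  have v: "\<alpha> = -2" "\<beta> = 4" "\<gamma> = 2 * real n - 4" using assms(2) D by auto
  show ?thesis unfolding D
    by (rule caseD[OF n assms(4) _ assms(6,7,8) v assms(3)]) (use assms(5) D in simp)
next
  case G2
  have v: "\<alpha> = -2" "\<beta> = 10/3" "\<gamma> = 8/3" using assms(2) G2 by auto
  show ?thesis unfolding G2
    by (rule caseG2[OF assms(4) _ assms(6,7,8)]) (use assms(5) G2 v assms(3) in simp_all)
next
  case F4
  have v: "\<alpha> = -2" "\<beta> = 5" "\<gamma> = 6" using assms(2) F4 by auto
  show ?thesis unfolding F4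
    by (rule caseF4[OF assms(4) _ assms(6,7,8)]) (use assms(5) F4 v assms(3) in simp_all)
next
  case E6
  have v: "\<alpha> = -2" "\<beta> = 6" "\<gamma> = 8" using assms(2) E6 by auto
  show ?thesis unfolding E6
    by (rule caseE6[OF assms(4) _ assms(6,7,8)]) (use assms(5) E6 v assms(3) in simp_all)
next
  case E7
  have v: "\<alpha> = -2" "\<beta> = 8" "\<gamma> = 12" using assms(2) E7 by auto
  show ?thesis unfolding E7
    by (rule caseE7[OF assms(4) _ assms(6,7,8)]) (use assms(5) E7 v assms(3) in simp_all)
next
  case E8
  have v: "\<alpha> = -2" "\<beta> = 12" "\<gamma> = 20" using assms(2) E8 by auto
  show ?thesis unfolding E8
    by (rule caseE8[OF assms(4) _ assms(6,7,8)]) (use assms(5) E8 v assms(3) in simp_all)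
qed

end
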